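(* Let $X$ be a complex Banach space and let $\mathcal{D}=\{X_n:n\ge1\}$ be an $R$-Schauder decomposition of $X$. Then: (a) every sectorial operator $A$ on $X$ which is a $\mathcal{D}$-multiplier is $R$-sectorial of $R$-type $0$ (i.e. of $R$-type $\omega$ for every $\omega\in(0,\pi)$); (b) every Ritt operator $T\in B(X)$ which is a $\mathcal{D}$-multiplier is $R$-Ritt.
   Context: $R$-boundedness: with $(\varepsilon_j)$ independent Rademacher variables on $(\Omega,\mathbb{P})$ and $\|\sum_{j=1}^k\varepsilon_j\otimes x_j\|_{R,X}=\int_\Omega\|\sum_j\varepsilon_j(u)x_j\|\,d\mathbb{P}(u)$, a set $F\subset B(X)$ is $R$-bounded if there is $K$ with $\|\sum_j\varepsilon_j\otimes T_j x_j\|_{R,X}\le K\|\sum_j\varepsilon_j\otimes x_j\|_{R,X}$ for all finite families $T_j\in F$, $x_j\in X$. $\Sigma_\omega=\{\lambda\ne0:|\mathrm{Arg}\lambda|<\omega\}$. A closed densely defined $A$ is sectorial of type $\omega\in(0,\pi)$ if $\sigma(A)\subset\overline{\Sigma_\omega}$ and for each $\theta\in(\omega,\pi)$ the set $\{\lambda(\lambda I_X-A)^{-1}:\lambda\in\mathbb{C}\setminus\overline{\Sigma_\theta}\}$ is bounded; $R$-sectorial of $R$-type $\omega$ if moreover these sets are $R$-bounded; ($R$-)type $0$ means ($R$-)type $\omega$ for all $\omega\in(0,\pi)$. $T\in B(X)$ is a Ritt operator if $\{T^n:n\ge0\}$ and $\{nT^n(I_X-T):n\ge1\}$ are bounded,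 and $R$-Ritt if both sets are $R$-bounded. A Schauder decomposition of $X$ is a sequence $\mathcal{D}=\{X_n:n\ge1\}$ of closed subspaces such that every $x\in X$ has a unique expansion $x=\sum_{n\ge1}x_n$ with $x_n\in X_n$; $p_n(x)=x_n$ and $P_N=\sum_{n=1}^Np_n$ (the set $\{P_N:N\ge1\}$ is then bounded). $\mathcal{D}$ is $R$-Schauder if $\{P_N:N\ge1\}$ is $R$-bounded. A sectorial $\mathcal{D}$-multiplier is an operator $A$ of the form: for a nondecreasing sequence $(a_n)_{n\ge1}$ in $(0,\infty)$, $D(A)=\{x\in X:\sum_n a_np_n(x)\text{ converges}\}$ and $Ax=\sum_{n\ge1}a_np_n(x)$ (such $A$ is sectorial of type $0$). A Ritt $\mathcal{D}$-multiplier is an operator $T(x)=\sum_{n\ge1}c_np_n(x)$ with $(c_n)_{n\ge1}$ a nondecreasing sequence in $(0,1)$. *)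

theory Defs
  imports "HOL-Analysis.Analysis"
begin

text \<open>HOL-Analysis has no complex vector spaces; a complex Banach space is a real Banach
space with a compatible complex scalar multiplication.\<close>

class complex_banach = banach +
  fixes scaleC :: "complex \<Rightarrow> 'a \<Rightarrow> 'a" (infixr "*\<^sub>C" 75)
  assumes scaleC_add_right: "a *\<^sub>C (x + y) = a *\<^sub>C x + a *\<^sub>C y"
    and scaleC_add_left: "(a + b) *\<^sub>C x = a *\<^sub>C x + b *\<^sub>C x"
    and scaleC_scaleC: "a *\<^sub>C (b *\<^sub>C x) = (a * b) *\<^sub>C x"
    and scaleC_one: "1 *\<^sub>C x = x"
    and scaleR_scaleC: "r *\<^sub>R x = complex_of_real r *\<^sub>C x"
    and norm_scaleC: "norm (a *\<^sub>C x) = cmod a * norm x"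

definition clin_on :: "'a::complex_banach set \<Rightarrow> ('a \<Rightarrow> 'a) \<Rightarrow> bool" where
  "clin_on D T \<longleftrightarrow> (\<forall>x\<in>D. \<forall>y\<in>D. T (x + y) = T x + T y) \<and>
                    (\<forall>c. \<forall>x\<in>D. T (c *\<^sub>C x) = c *\<^sub>C T x)"

definition csubspace :: "'a::complex_banach set \<Rightarrow> bool" where
  "csubspace S \<longleftrightarrow> 0 \<in> S \<and> (\<forall>x\<in>S. \<forall>y\<in>S. x + y \<in> S) \<and> (\<forall>c. \<forall>x\<in>S. c *\<^sub>C x \<in> S)"

definition bop :: "('a::complex_banach \<Rightarrow> 'a) \<Rightarrow> bool" where
  "bop T \<longleftrightarrow> clin_on UNIV T \<and> (\<exists>K. \<forall>x. norm (T x) \<le> K * norm x)"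

definition op_bounded_set :: "('a::complex_banach \<Rightarrow> 'a) set \<Rightarrow> bool" where
  "op_bounded_set F \<longleftrightarrow> (\<exists>K. \<forall>S\<in>F. \<forall>x. norm (S x) \<le> K * norm x)"

text \<open>\<open>rad_norm x k\<close> = \<open>\<parallel>\<Sum>_{j<k} \<epsilon>_j \<otimes> x_j\<parallel>_{R,X}\<close>: the expectation over independent
Rademacher variables, i.e. the average over all sign vectors.\<close>
definition rad_norm :: "(nat \<Rightarrow> 'a::complex_banach) \<Rightarrow> nat \<Rightarrow> real" where
  "rad_norm x k = (\<Sum>s\<in>PiE {..<k} (\<lambda>_. {-1::real, 1}). norm (\<Sum>j<k. s j *\<^sub>R x j)) / 2 ^ k"

definition R_bounded :: "('a::complex_banach \<Rightarrow> 'a) set \<Rightarrow> bool" where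
  "R_bounded F \<longleftrightarrow> (\<exists>K. \<forall>k (T :: nat \<Rightarrow> 'a \<Rightarrow> 'a) x. (\<forall>j<k. T j \<in> F) \<longrightarrow>
        rad_norm (\<lambda>j. T j (x j)) k \<le> K * rad_norm x k)"

definition sector :: "real \<Rightarrow> complex set" where
  "sector \<omega> = {z. z \<noteq> 0 \<and> \<bar>Arg z\<bar> < \<omega>}"

text \<open>An (unbounded) operator is a pair of a domain \<open>D\<close> and a map \<open>A\<close> (relevant on \<open>D\<close>).
\<open>R\<close> is the resolvent \<open>(\<lambda>I - A)\<^sup>-\<^sup>1\<close> at \<open>\<lambda>\<close>.\<close>
definition is_resolvent :: "'a::complex_banach set \<Rightarrow> ('a \<Rightarrow> 'a) \<Rightarrow> complex \<Rightarrow> ('a \<Rightarrow> 'a) \<Rightarrow> bool" where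
  "is_resolvent D A z R \<longleftrightarrow> bop R \<and> (\<forall>x. R x \<in> D \<and> z *\<^sub>C R x - A (R x) = x)
      \<and> (\<forall>y\<in>D. R (z *\<^sub>C y - A y) = y)"

definition resolvent_set :: "'a::complex_banach set \<Rightarrow> ('a \<Rightarrow> 'a) \<Rightarrow> complex set" where
  "resolvent_set D A = {z. \<exists>R. is_resolvent D A z R}"

definition op_spectrum :: "'a::complex_banach set \<Rightarrow> ('a \<Rightarrow> 'a) \<Rightarrow> complex set" where
  "op_spectrum D A = - resolvent_set D A"

definition resolvent :: "'a::complex_banach set \<Rightarrow> ('a \<Rightarrow> 'a) \<Rightarrow> complex \<Rightarrow> 'a \<Rightarrow> 'a" where
  "resolvent D A z = (THE R. is_resolvent D A z R)"

definition closed_densely_defined :: "'a::complex_banach set \<Rightarrow> ('a \<Rightarrow> 'a) \<Rightarrow> bool" where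
  "closed_densely_defined D A \<longleftrightarrow> csubspace D \<and> clin_on D A \<and>
      closed {(x, A x) | x. x \<in> D} \<and> closure D = UNIV"

definition sectorial_type :: "'a::complex_banach set \<Rightarrow> ('a \<Rightarrow> 'a) \<Rightarrow> real \<Rightarrow> bool" where
  "sectorial_type D A \<omega> \<longleftrightarrow> closed_densely_defined D A \<and>
      op_spectrum D A \<subseteq> closure (sector \<omega>) \<and>
      (\<forall>\<theta>. \<omega> < \<theta> \<and> \<theta> < pi \<longrightarrow>
         op_bounded_set {(\<lambda>x. z *\<^sub>C resolvent D A z x) | z. z \<notin> closure (sector \<theta>)})"

definition R_sectorial_type :: "'a::complex_banach set \<Rightarrow> ('a \<Rightarrow> 'a) \<Rightarrow> real \<Rightarrow> bool" where
  "R_sectorial_type D A \<omega> \<longleftrightarrow> sectorial_type D A \<omega> \<and>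
      (\<forall>\<theta>. \<omega> < \<theta> \<and> \<theta> < pi \<longrightarrow>
         R_bounded {(\<lambda>x. z *\<^sub>C resolvent D A z x) | z. z \<notin> closure (sector \<theta>)})"

definition R_sectorial_type0 :: "'a::complex_banach set \<Rightarrow> ('a \<Rightarrow> 'a) \<Rightarrow> bool" where
  "R_sectorial_type0 D A \<longleftrightarrow> (\<forall>\<omega>. 0 < \<omega> \<and> \<omega> < pi \<longrightarrow> R_sectorial_type D A \<omega>)"

definition Ritt :: "('a::complex_banach \<Rightarrow> 'a) \<Rightarrow> bool" where
  "Ritt T \<longleftrightarrow> bop T \<and> op_bounded_set {T ^^ n | n. True} \<and>
      op_bounded_set {(\<lambda>x. of_nat n *\<^sub>R (T ^^ n) (x - T x)) | n. n \<ge> 1}"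

definition R_Ritt :: "('a::complex_banach \<Rightarrow> 'a) \<Rightarrow> bool" where
  "R_Ritt T \<longleftrightarrow> bop T \<and> R_bounded {T ^^ n | n. True} \<and>
      R_bounded {(\<lambda>x. of_nat n *\<^sub>R (T ^^ n) (x - T x)) | n. n \<ge> 1}"

text \<open>Subspaces indexed by \<open>n \<ge> 1\<close>; an expansion is a sequence \<open>y\<close> with \<open>y 0 = 0\<close>.\<close>
definition expansion :: "(nat \<Rightarrow> 'a::complex_banach set) \<Rightarrow> 'a \<Rightarrow> (nat \<Rightarrow> 'a) \<Rightarrow> bool" where
  "expansion Xs x y \<longleftrightarrow> y 0 = 0 \<and> (\<forall>n\<ge>1. y n \<in> Xs n) \<and>
      (\<lambda>N. \<Sum>n=1..N. y n) \<longlonglongrightarrow> x"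

definition schauder_decomp :: "(nat \<Rightarrow> 'a::complex_banach set) \<Rightarrow> bool" where
  "schauder_decomp Xs \<longleftrightarrow> (\<forall>n\<ge>1. closed (Xs n) \<and> csubspace (Xs n)) \<and>
      (\<forall>x. \<exists>!y. expansion Xs x y)"

definition sd_proj :: "(nat \<Rightarrow> 'a::complex_banach set) \<Rightarrow> nat \<Rightarrow> 'a \<Rightarrow> 'a" where
  "sd_proj Xs n x = (THE y. expansion Xs x y) n"

definition sd_partial :: "(nat \<Rightarrow> 'a::complex_banach set) \<Rightarrow> nat \<Rightarrow> 'a \<Rightarrow> 'a" where
  "sd_partial Xs N x = (\<Sum>n=1..N. sd_proj Xs n x)"

definition R_schauder_decomp :: "(nat \<Rightarrow> 'a::complex_banach set) \<Rightarrow> bool" where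
  "R_schauder_decomp Xs \<longleftrightarrow> schauder_decomp Xs \<and> R_bounded {sd_partial Xs N | N. N \<ge> 1}"

definition mult_dom :: "(nat \<Rightarrow> 'a::complex_banach set) \<Rightarrow> (nat \<Rightarrow> real) \<Rightarrow> 'a set" where
  "mult_dom Xs a = {x. convergent (\<lambda>N. \<Sum>n=1..N. a n *\<^sub>R sd_proj Xs n x)}"

definition mult_op :: "(nat \<Rightarrow> 'a::complex_banach set) \<Rightarrow> (nat \<Rightarrow> real) \<Rightarrow> 'a \<Rightarrow> 'a" where
  "mult_op Xs a x = lim (\<lambda>N. \<Sum>n=1..N. a n *\<^sub>R sd_proj Xs n x)"

end

theory Submission
  imports Defs
begin


context complex_banach begin

lemma scaleC_zero_right [simp]: "a *\<^sub>C 0 = 0"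
proof -
  have "a *\<^sub>C (0 + 0) = a *\<^sub>C 0 + a *\<^sub>C 0" by (rule scaleC_add_right)
  then show ?thesis by simp
qed

lemma scaleC_zero_left [simp]: "0 *\<^sub>C x = 0"
proof -
  have "(0 + 0) *\<^sub>C x = 0 *\<^sub>C x + 0 *\<^sub>C x" by (rule scaleC_add_left)
  then show ?thesis by simp
qed

lemma scaleC_minus_right: "a *\<^sub>C (- x) = - (a *\<^sub>C x)"
proof -
  have "a *\<^sub>C (- x + x) = a *\<^sub>C (- x) + a *\<^sub>C x" by (rule scaleC_add_right)
  then show ?thesis by (simp add: eq_neg_iff_add_eq_0)
qed

lemma scaleC_minus_left: "(- a) *\<^sub>C x = - (a *\<^sub>C x)"
proof -
  have "(- a + a) *\<^sub>C x = (- a) *\<^sub>C x + a *\<^sub>C x" by (rule scaleC_add_left)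
  then show ?thesis by (simp add: eq_neg_iff_add_eq_0)
qed

lemma scaleC_diff_right: "a *\<^sub>C (x - y) = a *\<^sub>C x - a *\<^sub>C y"
  using scaleC_add_right[of a x "- y"] by (simp add: scaleC_minus_right)

lemma scaleC_diff_left: "(a - b) *\<^sub>C x = a *\<^sub>C x - b *\<^sub>C x"
  using scaleC_add_left[of a "- b" x] by (simp add: scaleC_minus_left)

lemma scaleC_sum_right: "a *\<^sub>C (\<Sum>i\<in>A. f i) = (\<Sum>i\<in>A. a *\<^sub>C f i)"
  by (induction A rule: infinite_finite_induct) (auto simp: scaleC_add_right)

lemma scaleC_sum_left: "(\<Sum>i\<in>A. f i) *\<^sub>C x = (\<Sum>i\<in>A. f i *\<^sub>C x)"
  by (induction A rule: infinite_finite_induct) (auto simp: scaleC_add_left)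

lemma scaleC_scaleR: "a *\<^sub>C (r *\<^sub>R x) = r *\<^sub>R (a *\<^sub>C x)"
  by (simp add: scaleR_scaleC scaleC_scaleC mult.commute)

lemma scaleC_of_real: "complex_of_real r *\<^sub>C x = r *\<^sub>R x"
  by (simp add: scaleR_scaleC)

end


lemma bounded_bilinear_scaleC: "bounded_bilinear (\<lambda>(a::complex) (x::'a::complex_banach). a *\<^sub>C x)"
  apply (unfold_locales)
      apply (rule scaleC_add_left)
     apply (rule scaleC_add_right)
    apply (simp only: scaleR_scaleC scaleC_scaleC)
    apply (simp add: scaleR_conv_of_real)
   apply (rule scaleC_scaleR)
  apply (rule exI[of _ 1])
  apply (simp add: norm_scaleC)
  done

lemma tendsto_scaleC [tendsto_intros]:
  fixes g :: "_ \<Rightarrow> 'a::complex_banach"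
  shows "(f \<longlongrightarrow> a) F \<Longrightarrow> (g \<longlongrightarrow> x) F \<Longrightarrow> ((\<lambda>i. f i *\<^sub>C g i) \<longlongrightarrow> a *\<^sub>C x) F"
  using bounded_bilinear.tendsto[OF bounded_bilinear_scaleC] by blast

lemma clin_bounded_linear:
  fixes T :: "'a::complex_banach \<Rightarrow> 'a"
  assumes "clin_on UNIV T" "\<And>x. norm (T x) \<le> K * norm x"
  shows "bounded_linear T"
proof (rule bounded_linear_intro[where K=K])
  fix x y show "T (x + y) = T x + T y" using assms(1) by (simp add: clin_on_def)
next
  fix r x show "T (r *\<^sub>R x) = r *\<^sub>R T x" using assms(1) by (simp add: clin_on_def scaleR_scaleC)
next
  fix x show "norm (T x) \<le> norm x * K" using assms(2)[of x] by (simp add: mult.commute)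
qed



abbreviation "Sg (k::nat) \<equiv> PiE {..<k} (\<lambda>_. {-1::real, 1})"

lemma finite_Sg: "finite (Sg k)" by (intro finite_PiE) auto

lemma rad_norm_nonneg: "0 \<le> rad_norm x k"
  unfolding rad_norm_def by (intro divide_nonneg_pos sum_nonneg) auto

lemma rad_norm_cong: "(\<And>j. j < k \<Longrightarrow> x j = y j) \<Longrightarrow> rad_norm x k = rad_norm y k"
  unfolding rad_norm_def by (intro arg_cong2[where f="(/)"] sum.cong refl arg_cong[where f=norm]) auto

lemma rad_norm_add: "rad_norm (\<lambda>j. x j + y j) k \<le> rad_norm x k + rad_norm y k"
proof -
  have "(\<Sum>s\<in>Sg k. norm (\<Sum>j<k. s j *\<^sub>R (x j + y j))) \<le>
        (\<Sum>s\<in>Sg k. norm (\<Sum>j<k. s j *\<^sub>R x j) + norm (\<Sum>j<k. s j *\<^sub>R y j))"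
    by (intro sum_mono) (simp add: scaleR_add_right sum.distrib norm_triangle_ineq)
  then show ?thesis unfolding rad_norm_def by (simp add: sum.distrib add_divide_distrib[symmetric] divide_right_mono)
qed

lemma rad_norm_scale: "rad_norm (\<lambda>j. c *\<^sub>R x j) k = \<bar>c\<bar> * rad_norm x k"
proof -
  have "(\<Sum>s\<in>Sg k. norm (\<Sum>j<k. s j *\<^sub>R c *\<^sub>R x j)) = (\<Sum>s\<in>Sg k. \<bar>c\<bar> * norm (\<Sum>j<k. s j *\<^sub>R x j))"
  proof (intro sum.cong refl)
    fix s :: "nat \<Rightarrow> real"
    have "(\<Sum>j<k. s j *\<^sub>R c *\<^sub>R x j) = c *\<^sub>R (\<Sum>j<k. s j *\<^sub>R x j)"
      by (simp add: scaleR_sum_right mult.commute)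
    then show "norm (\<Sum>j<k. s j *\<^sub>R c *\<^sub>R x j) = \<bar>c\<bar> * norm (\<Sum>j<k. s j *\<^sub>R x j)"
      by simp
  qed
  then show ?thesis unfolding rad_norm_def by (simp add: sum_distrib_left)
qed

lemma rad_norm_sign:
  assumes "\<And>j. j < k \<Longrightarrow> \<sigma> j \<in> {-1, 1}"
  shows "rad_norm (\<lambda>j. \<sigma> j *\<^sub>R x j) k = rad_norm x k"
proof -
  define f where "f s = (\<lambda>j. if j < k then \<sigma> j * s j else undefined)" for s :: "nat \<Rightarrow> real"
  have sq: "\<sigma> j * \<sigma> j = 1" if "j < k" for j using assms[OF that] by auto
  have inv: "f (f s) = s" if s: "s \<in> Sg k" for s
  proof
    fix j show "f (f s) j = s j"
    proof (cases "j < k")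
      case True
      then have "\<sigma> j * (\<sigma> j * s j) = s j" using sq[of j] by (metis mult.assoc mult_1)
      then show ?thesis using True by (simp add: f_def)
    next
      case False
      then show ?thesis using s by (simp add: f_def PiE_def extensional_def)
    qed
  qed
  have mem: "f s \<in> Sg k" if s: "s \<in> Sg k" for s
  proof -
    have "\<sigma> j * s j \<in> {-1,1}" if "j < k" for j using s assms[OF that] that by (auto simp: PiE_def)
    then show ?thesis by (auto simp: f_def PiE_def extensional_def)
  qed
  have eq: "norm (\<Sum>j<k. f s j *\<^sub>R x j) = norm (\<Sum>j<k. s j *\<^sub>R (\<sigma> j *\<^sub>R x j))" for s
  proof -
    have "(\<Sum>j<k. f s j *\<^sub>R x j) = (\<Sum>j<k. s j *\<^sub>R (\<sigma> j *\<^sub>R x j))"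
      by (intro sum.cong refl) (simp add: f_def mult.commute)
    then show ?thesis by simp
  qed
  have "(\<Sum>s\<in>Sg k. norm (\<Sum>j<k. s j *\<^sub>R (\<sigma> j *\<^sub>R x j))) = (\<Sum>s\<in>Sg k. norm (\<Sum>j<k. s j *\<^sub>R x j))"
    by (rule sum.reindex_bij_witness[where i=f and j=f]) (use inv mem eq in auto)
  then show ?thesis unfolding rad_norm_def by simp
qed

lemma rad_norm_scaleC_unit:
  fixes x :: "nat \<Rightarrow> 'a::complex_banach"
  assumes "cmod u = 1"
  shows "rad_norm (\<lambda>j. u *\<^sub>C x j) k = rad_norm x k"
proof -
  have "(\<Sum>j<k. s j *\<^sub>R (u *\<^sub>C x j)) = u *\<^sub>C (\<Sum>j<k. s j *\<^sub>R x j)" for s :: "nat \<Rightarrow> real"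
    by (simp add: scaleC_sum_right scaleC_scaleR)
  then show ?thesis unfolding rad_norm_def by (simp add: norm_scaleC assms)
qed

lemma rad_norm_one: "rad_norm x 1 = norm (x 0)"
proof -
  have "(\<Sum>s\<in>Sg 1. norm (\<Sum>j<1. s j *\<^sub>R x j)) = (\<Sum>s\<in>Sg 1. norm (x 0))"
  proof (intro sum.cong refl)
    fix s assume "s \<in> Sg 1"
    then have "s 0 \<in> {-1,1}" by (auto simp: PiE_def)
    then show "norm (\<Sum>j<1. s j *\<^sub>R x j) = norm (x 0)" by auto
  qed
  also have "\<dots> = 2 * norm (x 0)" by (simp add: card_PiE)
  finally show ?thesis unfolding rad_norm_def by simp
qed

lemma rad_norm_convex:
  assumes m: "m < k" and I: "finite I" and w: "\<And>i. i \<in> I \<Longrightarrow> 0 \<le> w i" and w1: "sum w I = 1"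
  shows "rad_norm (x(m := \<Sum>i\<in>I. w i *\<^sub>R z i)) k \<le> (\<Sum>i\<in>I. w i * rad_norm (x(m := z i)) k)"
proof -
  define A where "A s = (\<Sum>j\<in>{..<k}-{m}. s j *\<^sub>R x j)" for s :: "nat \<Rightarrow> real"
  have split: "(\<Sum>j<k. s j *\<^sub>R (x(m:=v)) j) = s m *\<^sub>R v + A s" for s v
  proof -
    have "(\<Sum>j<k. s j *\<^sub>R (x(m:=v)) j) = s m *\<^sub>R v + (\<Sum>j\<in>{..<k}-{m}. s j *\<^sub>R (x(m:=v)) j)"
      using m by (subst sum.remove[of _ m]) auto
    also have "(\<Sum>j\<in>{..<k}-{m}. s j *\<^sub>R (x(m:=v)) j) = A s"
      unfolding A_def by (intro sum.cong) auto
    finally show ?thesis .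
  qed
  have pt: "norm (\<Sum>j<k. s j *\<^sub>R (x(m := \<Sum>i\<in>I. w i *\<^sub>R z i)) j)
        \<le> (\<Sum>i\<in>I. w i * norm (\<Sum>j<k. s j *\<^sub>R (x(m := z i)) j))" for s
  proof -
    have e1: "(\<Sum>i\<in>I. w i *\<^sub>R (s m *\<^sub>R z i + A s)) = (\<Sum>i\<in>I. w i *\<^sub>R (s m *\<^sub>R z i)) + (\<Sum>i\<in>I. w i *\<^sub>R A s)"
      by (simp only: scaleR_add_right sum.distrib)
    have e2: "(\<Sum>i\<in>I. w i *\<^sub>R A s) = A s"
      by (simp only: scaleR_sum_left[symmetric] w1 scaleR_one)
    have e3: "(\<Sum>i\<in>I. w i *\<^sub>R (s m *\<^sub>R z i)) = s m *\<^sub>R (\<Sum>i\<in>I. w i *\<^sub>R z i)"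
      by (simp only: scaleR_sum_right scaleR_left_commute)
    have "s m *\<^sub>R (\<Sum>i\<in>I. w i *\<^sub>R z i) + A s = (\<Sum>i\<in>I. w i *\<^sub>R (s m *\<^sub>R z i + A s))"
      by (simp only: e1 e2 e3)
    then have "norm (s m *\<^sub>R (\<Sum>i\<in>I. w i *\<^sub>R z i) + A s) \<le> (\<Sum>i\<in>I. norm (w i *\<^sub>R (s m *\<^sub>R z i + A s)))"
      by (metis norm_sum)
    also have "\<dots> = (\<Sum>i\<in>I. w i * norm (s m *\<^sub>R z i + A s))"
      by (intro sum.cong refl) (simp add: w abs_of_nonneg)
    finally show ?thesis by (simp only: split)
  qed
  have "(\<Sum>s\<in>Sg k. norm (\<Sum>j<k. s j *\<^sub>R (x(m := \<Sum>i\<in>I. w i *\<^sub>R z i)) j))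
      \<le> (\<Sum>s\<in>Sg k. \<Sum>i\<in>I. w i * norm (\<Sum>j<k. s j *\<^sub>R (x(m := z i)) j))"
    by (intro sum_mono pt)
  also have "\<dots> = (\<Sum>i\<in>I. w i * (\<Sum>s\<in>Sg k. norm (\<Sum>j<k. s j *\<^sub>R (x(m := z i)) j)))"
    by (subst sum.swap) (simp add: sum_distrib_left)
  finally show ?thesis unfolding rad_norm_def times_divide_eq_right sum_divide_distrib[symmetric]
    by (intro divide_right_mono) auto
qed

lemma rad_norm_tendsto:
  assumes "\<And>j. j < k \<Longrightarrow> ((\<lambda>n. y n j) \<longlongrightarrow> x j) F"
  shows "((\<lambda>n. rad_norm (y n) k) \<longlongrightarrow> rad_norm x k) F"
  unfolding rad_norm_def using assms by (intro tendsto_intros) auto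



definition in_hull :: "('a::complex_banach \<Rightarrow> 'a) set \<Rightarrow> ('a \<Rightarrow> 'a) \<Rightarrow> bool" where
  "in_hull G T \<longleftrightarrow> (\<exists>(I::(nat \<times> bool) set) w g. finite I \<and> (\<forall>i\<in>I. 0 \<le> w i \<and> g i \<in> G) \<and> sum w I = 1 \<and>
      (\<forall>v. T v = (\<Sum>i\<in>I. w i *\<^sub>R g i v)))"

lemma hull_Rbound:
  fixes G :: "('a::complex_banach \<Rightarrow> 'a) set"
  assumes G: "\<And>k T x. (\<forall>j<k. T j \<in> G) \<Longrightarrow> rad_norm (\<lambda>j. T j (x j)) k \<le> K * rad_norm x k"
    and H: "\<forall>j<k. in_hull G (T j)"
  shows "rad_norm (\<lambda>j. T j (x j)) k \<le> K * rad_norm x k"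
proof -
  have "\<forall>T. (\<forall>j<k. (j < m \<longrightarrow> in_hull G (T j)) \<and> (m \<le> j \<longrightarrow> T j \<in> G)) \<longrightarrow>
          rad_norm (\<lambda>j. T j (x j)) k \<le> K * rad_norm x k" for m
  proof (induction m)
    case 0
    then show ?case using G by auto
  next
    case (Suc m)
    show ?case
    proof (intro allI impI)
      fix T assume hyp: "\<forall>j<k. (j < Suc m \<longrightarrow> in_hull G (T j)) \<and> (Suc m \<le> j \<longrightarrow> T j \<in> G)"
      show "rad_norm (\<lambda>j. T j (x j)) k \<le> K * rad_norm x k"
      proof (cases "m < k")
        case False
        then have "\<forall>j<k. (j < m \<longrightarrow> in_hull G (T j)) \<and> (m \<le> j \<longrightarrow> T j \<in> G)"
          using hyp by auto
        then show ?thesis using Suc.IH by blast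
      next
        case True
        then have "in_hull G (T m)" using hyp by auto
        then obtain I :: "(nat \<times> bool) set" and w g where I: "finite I" and wg: "\<forall>i\<in>I. 0 \<le> w i \<and> g i \<in> G"
          and w1: "sum w I = 1" and Tm: "\<forall>v. T m v = (\<Sum>i\<in>I. w i *\<^sub>R g i v)"
          unfolding in_hull_def by blast
        have ih: "rad_norm (\<lambda>j. (T(m := g i)) j (x j)) k \<le> K * rad_norm x k" if "i \<in> I" for i
        proof -
          have "\<forall>j<k. (j < m \<longrightarrow> in_hull G ((T(m := g i)) j)) \<and> (m \<le> j \<longrightarrow> (T(m := g i)) j \<in> G)"
            using hyp wg that by auto
          then show ?thesis using Suc.IH by blast
        qed
        have eq1: "(\<lambda>j. T j (x j)) = (\<lambda>j. T j (x j))(m := \<Sum>i\<in>I. w i *\<^sub>R g i (x m))"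
          using Tm by (auto simp: fun_eq_iff)
        have eq2: "((\<lambda>j. T j (x j))(m := g i (x m))) = (\<lambda>j. (T(m := g i)) j (x j))" for i
          by (auto simp: fun_eq_iff)
        have "rad_norm (\<lambda>j. T j (x j)) k \<le> (\<Sum>i\<in>I. w i * rad_norm ((\<lambda>j. T j (x j))(m := g i (x m))) k)"
          by (subst eq1, rule rad_norm_convex[OF True I]) (use wg w1 in auto)
        also have "\<dots> \<le> (\<Sum>i\<in>I. w i * (K * rad_norm x k))"
          unfolding eq2 by (intro sum_mono mult_left_mono ih) (use wg in auto)
        also have "\<dots> = K * rad_norm x k" by (simp add: sum_distrib_right[symmetric] w1)
        finally show ?thesis .
      qed
    qed
  qed
  from this[of k] H show ?thesis by auto
qed

locale rsd =
  fixes Xs :: "nat \<Rightarrow> 'a::complex_banach set"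
  assumes RS: "R_schauder_decomp Xs"
begin

abbreviation "p \<equiv> sd_proj Xs"
abbreviation "P \<equiv> sd_partial Xs"

lemma SD: "schauder_decomp Xs" using RS by (simp add: R_schauder_decomp_def)

lemma exp_ex: "expansion Xs x (\<lambda>n. p n x)"
proof -
  have "\<exists>!y. expansion Xs x y" using SD by (simp add: schauder_decomp_def)
  then have "expansion Xs x (THE y. expansion Xs x y)" by (rule theI')
  moreover have "(\<lambda>n. p n x) = (THE y. expansion Xs x y)" by (simp add: sd_proj_def)
  ultimately show ?thesis by simp
qed

lemma exp_unique: "expansion Xs x y \<Longrightarrow> p n x = y n"
proof -
  assume e: "expansion Xs x y"
  have "\<exists>!y. expansion Xs x y" using SD by (simp add: schauder_decomp_def)
  then have "(THE y. expansion Xs x y) = y" using e by (metis the1_equality)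
  then show ?thesis by (simp add: sd_proj_def)
qed

lemma Xs_sub: "n \<ge> 1 \<Longrightarrow> csubspace (Xs n)" using SD by (simp add: schauder_decomp_def)

lemma p0 [simp]: "p 0 x = 0" using exp_ex[of x] by (simp add: expansion_def)

lemma p_mem: "n \<ge> 1 \<Longrightarrow> p n x \<in> Xs n" using exp_ex[of x] by (simp add: expansion_def)

lemma P_tendsto: "(\<lambda>N. P N x) \<longlonglongrightarrow> x"
  using exp_ex[of x] by (simp add: expansion_def sd_partial_def)

lemma P_0 [simp]: "P 0 x = 0" by (simp add: sd_partial_def)

lemma P_Suc: "P (Suc N) x = P N x + p (Suc N) x" by (simp add: sd_partial_def)

lemma p_add: "p n (x + y) = p n x + p n y"
proof -
  have "expansion Xs (x + y) (\<lambda>n. p n x + p n y)"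
    unfolding expansion_def
  proof (intro conjI allI impI)
    show "p 0 x + p 0 y = 0" by simp
    fix n :: nat assume "n \<ge> 1"
    then show "p n x + p n y \<in> Xs n" using Xs_sub p_mem by (auto simp: csubspace_def)
  next
    have "(\<lambda>N. P N x + P N y) \<longlonglongrightarrow> x + y" by (intro tendsto_intros P_tendsto)
    then show "(\<lambda>N. \<Sum>n = 1..N. p n x + p n y) \<longlonglongrightarrow> x + y"
      by (simp add: sd_partial_def sum.distrib)
  qed
  then show ?thesis by (rule exp_unique)
qed

lemma p_scaleC: "p n (c *\<^sub>C x) = c *\<^sub>C p n x"
proof -
  have "expansion Xs (c *\<^sub>C x) (\<lambda>n. c *\<^sub>C p n x)"
    unfolding expansion_def
  proof (intro conjI allI impI)
    show "c *\<^sub>C p 0 x = 0" by simp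
    fix n :: nat assume "n \<ge> 1"
    then show "c *\<^sub>C p n x \<in> Xs n" using Xs_sub p_mem by (auto simp: csubspace_def)
  next
    have "(\<lambda>N. c *\<^sub>C P N x) \<longlonglongrightarrow> c *\<^sub>C x" by (intro tendsto_intros P_tendsto)
    then show "(\<lambda>N. \<Sum>n = 1..N. c *\<^sub>C p n x) \<longlonglongrightarrow> c *\<^sub>C x"
      by (simp add: sd_partial_def scaleC_sum_right)
  qed
  then show ?thesis by (rule exp_unique)
qed

lemma p_zero [simp]: "p n 0 = 0" using p_scaleC[of n 0 0] by simp

lemma p_p: "p n (p m x) = (if n = m then p m x else 0)"
proof (cases "m = 0")
  case True then show ?thesis by simp
next
  case False
  have "expansion Xs (p m x) (\<lambda>n. if n = m then p m x else 0)"
    unfolding expansion_def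
  proof (intro conjI allI impI)
    show "(if 0 = m then p m x else 0) = 0" using False by simp
    fix n :: nat assume "n \<ge> 1"
    then show "(if n = m then p m x else 0) \<in> Xs n" using Xs_sub p_mem by (auto simp: csubspace_def)
  next
    have "\<forall>N\<ge>m. (\<Sum>n = 1..N. if n = m then p m x else 0) = p m x"
      using False by (simp add: sum.delta)
    then have "eventually (\<lambda>N. (\<Sum>n = 1..N. if n = m then p m x else 0) = p m x) sequentially"
      by (auto simp: eventually_sequentially)
    then show "(\<lambda>N. \<Sum>n = 1..N. if n = m then p m x else 0) \<longlonglongrightarrow> p m x"
      by (rule tendsto_eventually)
  qed
  then show ?thesis by (rule exp_unique)
qed

lemma P_add: "P N (x + y) = P N x + P N y" by (simp add: sd_partial_def p_add sum.distrib)
lemma P_scaleC: "P N (c *\<^sub>C x) = c *\<^sub>C P N x" by (simp add: sd_partial_def p_scaleC scaleC_sum_right)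

lemma RB: "\<exists>K\<ge>0. \<forall>(k::nat) T x. (\<forall>j<k. T j \<in> {P N | N. N \<ge> 1}) \<longrightarrow> rad_norm (\<lambda>j. T j (x j)) k \<le> K * rad_norm x k"
proof -
  obtain K where K: "\<forall>(k::nat) T x. (\<forall>j<k. T j \<in> {P N | N. N \<ge> 1}) \<longrightarrow> rad_norm (\<lambda>j. T j (x j)) k \<le> K * rad_norm x k"
    using RS unfolding R_schauder_decomp_def R_bounded_def by blast
  show ?thesis
  proof (intro exI[of _ "max K 0"] conjI allI impI)
    fix k :: nat and T x assume "\<forall>j<k. T j \<in> {P N | N. N \<ge> 1}"
    then have "rad_norm (\<lambda>j. T j (x j)) k \<le> K * rad_norm x k" using K by blast
    also have "\<dots> \<le> max K 0 * rad_norm x k" by (intro mult_right_mono rad_norm_nonneg) auto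
    finally show "rad_norm (\<lambda>j. T j (x j)) k \<le> max K 0 * rad_norm x k" .
  qed simp
qed

definition KR where "KR = (SOME K. K \<ge> 0 \<and> (\<forall>(k::nat) T x. (\<forall>j<k. T j \<in> {P N | N. N \<ge> 1}) \<longrightarrow> rad_norm (\<lambda>j. T j (x j)) k \<le> K * rad_norm x k))"

lemma KR: "KR \<ge> 0" "\<And>k T x. (\<forall>j<k. T j \<in> {P N | N. N \<ge> 1}) \<Longrightarrow> rad_norm (\<lambda>j. T j (x j)) k \<le> KR * rad_norm x k"
  using someI_ex[OF RB] unfolding KR_def[symmetric] by blast+

lemma P_norm: "norm (P N x) \<le> KR * norm x"
proof (cases "N = 0")
  case True then show ?thesis using KR(1) by simp
next
  case False
  have "rad_norm (\<lambda>j. (\<lambda>_. P N) j ((\<lambda>_. x) j)) 1 \<le> KR * rad_norm (\<lambda>_. x) 1"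
    by (rule KR(2)) (use False in auto)
  then show ?thesis using rad_norm_one[of "\<lambda>_. x"] rad_norm_one[of "\<lambda>_. P N x"] by simp
qed

lemma p_eq: "p n x = P n x - P (n - 1) x"
  by (cases n) (simp_all add: P_Suc)

lemma p_norm: "norm (p n x) \<le> 2 * KR * norm x"
proof -
  have "norm (p n x) \<le> norm (P n x) + norm (P (n - 1) x)" unfolding p_eq by (rule norm_triangle_ineq4)
  also have "\<dots> \<le> KR * norm x + KR * norm x" by (intro add_mono P_norm)
  also have "\<dots> = 2 * KR * norm x" by (simp add: algebra_simps)
  finally show ?thesis .
qed

lemma p_clin: "clin_on UNIV (p n)" by (simp add: clin_on_def p_add p_scaleC)
lemma P_clin: "clin_on UNIV (P n)" by (simp add: clin_on_def P_add P_scaleC)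

lemma p_bl: "bounded_linear (p n)"
  by (rule clin_bounded_linear[OF p_clin]) (rule p_norm)
lemma P_bl: "bounded_linear (P n)"
  by (rule clin_bounded_linear[OF P_clin]) (rule P_norm)

lemma p_tendsto: "(f \<longlongrightarrow> l) F \<Longrightarrow> ((\<lambda>i. p n (f i)) \<longlongrightarrow> p n l) F"
  by (rule bounded_linear.tendsto[OF p_bl])

lemma p_sum: "p n (sum f A) = (\<Sum>i\<in>A. p n (f i))"
  by (rule linear_sum[OF bounded_linear.linear[OF p_bl]])

lemma p_diff: "p n (x - y) = p n x - p n y"
  by (rule linear_diff[OF bounded_linear.linear[OF p_bl]])

end



context rsd begin

definition G where "G = {(\<lambda>v. \<sigma> *\<^sub>R P N v) | \<sigma> N. \<sigma> \<in> {-1::real, 1} \<and> N \<ge> 1}"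

lemma G_bound:
  assumes "\<forall>j<k. T j \<in> G"
  shows "rad_norm (\<lambda>j. T j (x j)) k \<le> KR * rad_norm x k"
proof -
  have "\<forall>j. \<exists>\<sigma> N. j < k \<longrightarrow> \<sigma> \<in> {-1::real,1} \<and> N \<ge> 1 \<and> T j = (\<lambda>v. \<sigma> *\<^sub>R P N v)"
    using assms unfolding G_def by blast
  then obtain \<sigma> Nf where sN: "\<And>j. j < k \<Longrightarrow> \<sigma> j \<in> {-1::real,1} \<and> Nf j \<ge> 1 \<and> T j = (\<lambda>v. \<sigma> j *\<^sub>R P (Nf j) v)"
    by metis
  have "rad_norm (\<lambda>j. T j (x j)) k = rad_norm (\<lambda>j. \<sigma> j *\<^sub>R P (Nf j) (x j)) k"
    by (rule rad_norm_cong) (simp add: sN)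
  also have "\<dots> = rad_norm (\<lambda>j. P (Nf j) (x j)) k" by (rule rad_norm_sign) (use sN in auto)
  also have "\<dots> \<le> KR * rad_norm x k"
    using KR(2)[of k "\<lambda>j. P (Nf j)" x] sN by auto
  finally show ?thesis .
qed

lemma real_hull:
  assumes r1: "(\<Sum>n<N. \<bar>r n\<bar>) \<le> 1" and r0: "r 0 = 0"
  shows "in_hull G (\<lambda>v. \<Sum>n<N. r n *\<^sub>R P n v)"
proof -
  define s where "s = (\<Sum>n<N. \<bar>r n\<bar>)"
  define w where "w = (\<lambda>(n::nat, b::bool). if n = N then (1 - s) / 2 else if b then max (r n) 0 else max (- r n) 0)"
  define g where "g = (\<lambda>(n::nat, b::bool). (\<lambda>v. (if b then 1 else -1::real) *\<^sub>R P (max n 1) v))"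
  define I where "I = {..<Suc N} \<times> {True, False}"
  have mx: "max (a::real) 0 + max (- a) 0 = \<bar>a\<bar>" for a by auto
  have mx2: "max (a::real) 0 - max (- a) 0 = a" for a by auto
  have "sum w I = sum (\<lambda>(n,b). w (n,b)) I" by simp
  also have "\<dots> = (\<Sum>n<Suc N. \<Sum>b\<in>{True,False}. w (n, b))"
    unfolding I_def by (rule sum.cartesian_product[symmetric])
  also have "\<dots> = (\<Sum>n<N. \<bar>r n\<bar>) + (1 - s)"
    by (simp add: w_def mx)
  finally have w1: "sum w I = 1" by (simp add: s_def)
  have wg: "\<forall>i\<in>I. 0 \<le> w i \<and> g i \<in> G"
  proof
    fix i assume "i \<in> I"
    obtain n b where i: "i = (n, b)" by force
    have "0 \<le> w i" using r1 by (auto simp: w_def i s_def)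
    moreover have "g i \<in> G" unfolding G_def g_def i
      by (rule CollectI, rule exI[of _ "if b then 1 else -1"], rule exI[of _ "max n 1"]) auto
    ultimately show "0 \<le> w i \<and> g i \<in> G" by simp
  qed
  have rep: "(\<Sum>n<N. r n *\<^sub>R P n v) = (\<Sum>i\<in>I. w i *\<^sub>R g i v)" for v
  proof -
    have "(\<Sum>i\<in>I. w i *\<^sub>R g i v) = (\<Sum>(n,b)\<in>I. w (n, b) *\<^sub>R g (n, b) v)" by simp
    also have "\<dots> = (\<Sum>n<Suc N. \<Sum>b\<in>{True,False}. w (n, b) *\<^sub>R g (n, b) v)"
      unfolding I_def by (rule sum.cartesian_product[symmetric])
    also have "\<dots> = (\<Sum>n<N. (max (r n) 0 - max (- r n) 0) *\<^sub>R P (max n 1) v)"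
      by (simp add: w_def g_def scaleR_diff_left)
    also have "\<dots> = (\<Sum>n<N. r n *\<^sub>R P n v)"
    proof (intro sum.cong refl)
      fix n show "(max (r n) 0 - max (- r n) 0) *\<^sub>R P (max n 1) v = r n *\<^sub>R P n v"
      proof (cases "n = 0")
        case True then show ?thesis using r0 by simp
      next
        case False then have "max n 1 = n" by simp
        then show ?thesis by (simp only: mx2)
      qed
    qed
    finally show ?thesis by simp
  qed
  show ?thesis unfolding in_hull_def
    by (rule exI[of _ I], rule exI[of _ w], rule exI[of _ g]) (use w1 wg rep in \<open>auto simp: I_def\<close>)
qed

lemma real_comb_bound:
  assumes "\<forall>j<k. (\<Sum>n<N. \<bar>r j n\<bar>) \<le> 1 \<and> r j 0 = 0"
  shows "rad_norm (\<lambda>j. \<Sum>n<N. r j n *\<^sub>R P n (x j)) k \<le> KR * rad_norm x k"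
  apply (rule hull_Rbound[where G=G and K=KR])
   apply (erule G_bound)
  using real_hull assms by auto

lemma complex_comb_bound:
  assumes C: "C > 0" and mu: "\<forall>j<k. (\<Sum>n<N. cmod (\<mu> j n)) \<le> C"
  shows "rad_norm (\<lambda>j. \<Sum>n<N. \<mu> j n *\<^sub>C P n (x j)) k \<le> 2 * C * KR * rad_norm x k"
proof -
  define ra where "ra j n = (if n = 0 then 0 else Re (\<mu> j n) / C)" for j n
  define rb where "rb j n = (if n = 0 then 0 else Im (\<mu> j n) / C)" for j n
  have trm: "\<mu> j n *\<^sub>C P n v = C *\<^sub>R (ra j n *\<^sub>R P n v + \<i> *\<^sub>C (rb j n *\<^sub>R P n v))" for j n v
  proof (cases "n = 0")
    case True then show ?thesis by (simp add: ra_def rb_def)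
  next
    case False
    have "\<mu> j n *\<^sub>C P n v = (complex_of_real (Re (\<mu> j n)) + \<i> * complex_of_real (Im (\<mu> j n))) *\<^sub>C P n v"
      by (simp add: complex_eq[symmetric])
    also have "\<dots> = Re (\<mu> j n) *\<^sub>R P n v + \<i> *\<^sub>C (Im (\<mu> j n) *\<^sub>R P n v)"
      by (simp add: scaleC_add_left scaleC_scaleC[symmetric] scaleC_of_real)
    also have "\<dots> = C *\<^sub>R (ra j n *\<^sub>R P n v + \<i> *\<^sub>C (rb j n *\<^sub>R P n v))"
      using C False by (simp add: ra_def rb_def scaleR_add_right scaleC_scaleR[symmetric])
    finally show ?thesis .
  qed
  have sum_eq: "(\<Sum>n<N. \<mu> j n *\<^sub>C P n v) = C *\<^sub>R ((\<Sum>n<N. ra j n *\<^sub>R P n v) + \<i> *\<^sub>C (\<Sum>n<N. rb j n *\<^sub>R P n v))" for j v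
    by (simp add: trm scaleR_sum_right[symmetric] sum.distrib scaleC_sum_right)
  have ra: "\<forall>j<k. (\<Sum>n<N. \<bar>ra j n\<bar>) \<le> 1 \<and> ra j 0 = 0"
  proof (intro allI impI conjI)
    fix j assume j: "j < k"
    have "(\<Sum>n<N. \<bar>ra j n\<bar>) \<le> (\<Sum>n<N. cmod (\<mu> j n) / C)"
      using C by (intro sum_mono) (auto simp: ra_def abs_Re_le_cmod divide_right_mono)
    also have "\<dots> \<le> 1" using mu j C by (simp add: sum_divide_distrib[symmetric])
    finally show "(\<Sum>n<N. \<bar>ra j n\<bar>) \<le> 1" .
  qed (simp add: ra_def)
  have rb: "\<forall>j<k. (\<Sum>n<N. \<bar>rb j n\<bar>) \<le> 1 \<and> rb j 0 = 0"
  proof (intro allI impI conjI)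
    fix j assume j: "j < k"
    have "(\<Sum>n<N. \<bar>rb j n\<bar>) \<le> (\<Sum>n<N. cmod (\<mu> j n) / C)"
      using C by (intro sum_mono) (auto simp: rb_def abs_Im_le_cmod divide_right_mono)
    also have "\<dots> \<le> 1" using mu j C by (simp add: sum_divide_distrib[symmetric])
    finally show "(\<Sum>n<N. \<bar>rb j n\<bar>) \<le> 1" .
  qed (simp add: rb_def)
  have "rad_norm (\<lambda>j. \<Sum>n<N. \<mu> j n *\<^sub>C P n (x j)) k =
        rad_norm (\<lambda>j. C *\<^sub>R ((\<Sum>n<N. ra j n *\<^sub>R P n (x j)) + \<i> *\<^sub>C (\<Sum>n<N. rb j n *\<^sub>R P n (x j)))) k"
    by (simp add: sum_eq)
  also have "\<dots> = C * rad_norm (\<lambda>j. (\<Sum>n<N. ra j n *\<^sub>R P n (x j)) + \<i> *\<^sub>C (\<Sum>n<N. rb j n *\<^sub>R P n (x j))) k"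
    using C by (simp add: rad_norm_scale)
  also have "\<dots> \<le> C * (rad_norm (\<lambda>j. \<Sum>n<N. ra j n *\<^sub>R P n (x j)) k + rad_norm (\<lambda>j. \<i> *\<^sub>C (\<Sum>n<N. rb j n *\<^sub>R P n (x j))) k)"
    using C by (intro mult_left_mono rad_norm_add) auto
  also have "\<dots> = C * (rad_norm (\<lambda>j. \<Sum>n<N. ra j n *\<^sub>R P n (x j)) k + rad_norm (\<lambda>j. \<Sum>n<N. rb j n *\<^sub>R P n (x j)) k)"
    by (simp add: rad_norm_scaleC_unit)
  also have "\<dots> \<le> C * (KR * rad_norm x k + KR * rad_norm x k)"
    using C by (intro mult_left_mono add_mono real_comb_bound ra rb) auto
  finally show ?thesis by (simp add: algebra_simps)
qed

end



definition bv :: "(nat \<Rightarrow> complex) \<Rightarrow> real \<Rightarrow> bool" where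
  "bv b C \<longleftrightarrow> (\<forall>N. (\<Sum>n<N. cmod (b n - b (Suc n))) \<le> C) \<and> (\<forall>n. cmod (b n) \<le> C)"

context rsd begin

definition S where "S b N x = (\<Sum>n=1..N. b n *\<^sub>C p n x)"
definition M where "M b x = lim (\<lambda>N. S b N x)"

lemma S_0 [simp]: "S b 0 x = 0" by (simp add: S_def)
lemma S_Suc: "S b (Suc N) x = S b N x + b (Suc N) *\<^sub>C p (Suc N) x" by (simp add: S_def)

lemma abel: "S b N x = (\<Sum>n<N. (b n - b (Suc n)) *\<^sub>C P n x) + b N *\<^sub>C P N x"
proof (induction N)
  case 0 then show ?case by simp
next
  case (Suc N)
  have "S b (Suc N) x = (\<Sum>n<N. (b n - b (Suc n)) *\<^sub>C P n x) + b N *\<^sub>C P N x + b (Suc N) *\<^sub>C p (Suc N) x"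
    by (simp add: S_Suc Suc.IH)
  also have "\<dots> = (\<Sum>n<Suc N. (b n - b (Suc n)) *\<^sub>C P n x) + b (Suc N) *\<^sub>C P (Suc N) x"
    by (simp add: P_Suc scaleC_diff_left scaleC_add_right algebra_simps)
  finally show ?case .
qed

lemma abel2: "S b N x = (\<Sum>n<Suc N. (if n < N then b n - b (Suc n) else b N) *\<^sub>C P n x)"
  by (simp add: abel)

lemma S_cong: "(\<And>n. n \<ge> 1 \<Longrightarrow> b n = b' n) \<Longrightarrow> S b N x = S b' N x"
  unfolding S_def by (intro sum.cong) auto

lemma M_cong: "(\<And>n. n \<ge> 1 \<Longrightarrow> b n = b' n) \<Longrightarrow> M b x = M b' x"
proof -
  assume "\<And>n. n \<ge> 1 \<Longrightarrow> b n = b' n"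
  then have "(\<lambda>N. S b N x) = (\<lambda>N. S b' N x)" using S_cong by blast
  then show ?thesis by (simp add: M_def)
qed

lemma S_one: "S (\<lambda>_. 1) N x = P N x" by (simp add: S_def sd_partial_def scaleC_one)

lemma S_add: "S b N (x + y) = S b N x + S b N y"
  by (simp add: S_def p_add scaleC_add_right sum.distrib)

lemma S_scaleC: "S b N (c *\<^sub>C x) = c *\<^sub>C S b N x"
  by (simp add: S_def p_scaleC scaleC_scaleC scaleC_sum_right mult.commute)

lemma S_diff_coef: "S (\<lambda>n. b n - b' n) N x = S b N x - S b' N x"
  by (simp add: S_def scaleC_diff_left sum_subtractf)

lemma S_mult_coef: "S (\<lambda>n. c * b n) N x = c *\<^sub>C S b N x"
  by (simp add: S_def scaleC_scaleC scaleC_sum_right)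

lemma S_real: "(\<Sum>n=1..N. a n *\<^sub>R p n x) = S (\<lambda>n. complex_of_real (a n)) N x"
  by (simp add: S_def scaleC_of_real)

lemma S_conv:
  assumes "bv b C"
  shows "(\<lambda>N. S b N x) \<longlonglongrightarrow> M b x"
proof -
  have d: "(\<Sum>n<N. cmod (b n - b (Suc n))) \<le> C" for N using assms by (simp add: bv_def)
  have sd: "summable (\<lambda>n. cmod (b n - b (Suc n)))"
    by (rule summableI_nonneg_bounded[OF _ d]) simp
  have s1: "summable (\<lambda>n. (b n - b (Suc n)) *\<^sub>C P n x)"
  proof (rule summable_comparison_test'[where g="\<lambda>n. cmod (b n - b (Suc n)) * (KR * norm x)" and N=0])
    show "summable (\<lambda>n. cmod (b n - b (Suc n)) * (KR * norm x))" by (intro summable_mult2 sd)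
    fix n show "norm ((b n - b (Suc n)) *\<^sub>C P n x) \<le> cmod (b n - b (Suc n)) * (KR * norm x)"
      by (simp add: norm_scaleC mult_left_mono P_norm)
  qed
  have s2: "summable (\<lambda>n. b n - b (Suc n))"
    by (rule summable_comparison_test'[OF sd, of 0]) simp
  have "(\<lambda>N. \<Sum>n<N. b n - b (Suc n)) \<longlonglongrightarrow> suminf (\<lambda>n. b n - b (Suc n))"
    by (rule summable_LIMSEQ[OF s2])
  then have "(\<lambda>N. b 0 - (\<Sum>n<N. b n - b (Suc n))) \<longlonglongrightarrow> b 0 - suminf (\<lambda>n. b n - b (Suc n))"
    by (intro tendsto_intros)
  then have bconv: "b \<longlonglongrightarrow> b 0 - suminf (\<lambda>n. b n - b (Suc n))"
    by (simp add: sum_lessThan_telescope')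
  have "(\<lambda>N. (\<Sum>n<N. (b n - b (Suc n)) *\<^sub>C P n x) + b N *\<^sub>C P N x) \<longlonglongrightarrow>
          suminf (\<lambda>n. (b n - b (Suc n)) *\<^sub>C P n x) + (b 0 - suminf (\<lambda>n. b n - b (Suc n))) *\<^sub>C x"
    by (intro tendsto_intros summable_LIMSEQ[OF s1] bconv P_tendsto)
  then have "convergent (\<lambda>N. S b N x)" unfolding abel by (rule convergentI)
  then show ?thesis by (simp add: M_def convergent_LIMSEQ_iff)
qed

lemma S_Rbound:
  assumes C: "C > 0" and b: "\<forall>j<k. bv (b j) C"
  shows "rad_norm (\<lambda>j. S (b j) N (x j)) k \<le> 4 * C * KR * rad_norm x k"
proof -
  define \<mu> where "\<mu> j n = (if n < N then b j n - b j (Suc n) else b j N)" for j n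
  have "\<forall>j<k. (\<Sum>n<Suc N. cmod (\<mu> j n)) \<le> 2 * C"
  proof (intro allI impI)
    fix j assume "j < k"
    then have bj: "bv (b j) C" using b by simp
    have "(\<Sum>n<Suc N. cmod (\<mu> j n)) = (\<Sum>n<N. cmod (b j n - b j (Suc n))) + cmod (b j N)"
      by (simp add: \<mu>_def)
    also have "\<dots> \<le> C + C" using bj unfolding bv_def by (intro add_mono) auto
    finally show "(\<Sum>n<Suc N. cmod (\<mu> j n)) \<le> 2 * C" by simp
  qed
  then have "rad_norm (\<lambda>j. \<Sum>n<Suc N. \<mu> j n *\<^sub>C P n (x j)) k \<le> 2 * (2 * C) * KR * rad_norm x k"
    using C by (intro complex_comb_bound) auto
  moreover have "(\<lambda>j. S (b j) N (x j)) = (\<lambda>j. \<Sum>n<Suc N. \<mu> j n *\<^sub>C P n (x j))"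
    by (simp add: abel2 \<mu>_def)
  ultimately show ?thesis by simp
qed

lemma M_Rbound:
  assumes C: "C > 0" and b: "\<forall>j<k. bv (b j) C"
  shows "rad_norm (\<lambda>j. M (b j) (x j)) k \<le> 4 * C * KR * rad_norm x k"
proof -
  have "(\<lambda>N. rad_norm (\<lambda>j. S (b j) N (x j)) k) \<longlonglongrightarrow> rad_norm (\<lambda>j. M (b j) (x j)) k"
    by (rule rad_norm_tendsto) (use S_conv b in auto)
  then show ?thesis
    by (rule LIMSEQ_le_const2) (use S_Rbound[OF C b] in auto)
qed

lemma M_norm:
  assumes C: "C > 0" and b: "bv b C"
  shows "norm (M b x) \<le> 4 * C * KR * norm x"
  using M_Rbound[OF C, of 1 "\<lambda>_. b" "\<lambda>_. x"] b rad_norm_one[of "\<lambda>_. x"]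
    rad_norm_one[of "\<lambda>_. M b x"] by simp

lemma M_clin:
  assumes "bv b C"
  shows "clin_on UNIV (M b)"
proof -
  have "M b (x + y) = M b x + M b y" for x y
  proof -
    have "(\<lambda>N. S b N (x + y)) \<longlonglongrightarrow> M b x + M b y"
      unfolding S_add by (intro tendsto_intros S_conv[OF assms])
    then show ?thesis using S_conv[OF assms] LIMSEQ_unique by blast
  qed
  moreover have "M b (c *\<^sub>C x) = c *\<^sub>C M b x" for c x
  proof -
    have "(\<lambda>N. S b N (c *\<^sub>C x)) \<longlonglongrightarrow> c *\<^sub>C M b x"
      unfolding S_scaleC by (intro tendsto_intros S_conv[OF assms])
    then show ?thesis using S_conv[OF assms] LIMSEQ_unique by blast
  qed
  ultimately show ?thesis by (simp add: clin_on_def)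
qed

lemma p_S: "n \<ge> 1 \<Longrightarrow> n \<le> N \<Longrightarrow> p n (S b N x) = b n *\<^sub>C p n x"
proof -
  assume n: "n \<ge> 1" "n \<le> N"
  have "p n (S b N x) = (\<Sum>m=1..N. b m *\<^sub>C p n (p m x))"
    by (simp add: S_def p_sum p_scaleC)
  also have "\<dots> = (\<Sum>m=1..N. if n = m then b n *\<^sub>C p n x else 0)"
    by (intro sum.cong refl) (simp add: p_p)
  also have "\<dots> = b n *\<^sub>C p n x" using n by (simp add: sum.delta)
  finally show ?thesis .
qed

lemma p_lim:
  assumes n: "n \<ge> 1" and L: "(\<lambda>N. S b N x) \<longlonglongrightarrow> L"
  shows "p n L = b n *\<^sub>C p n x"
proof -
  have "(\<lambda>N. p n (S b N x)) \<longlonglongrightarrow> p n L" by (rule p_tendsto[OF L])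
  moreover have "eventually (\<lambda>N. p n (S b N x) = b n *\<^sub>C p n x) sequentially"
    using p_S[OF n] by (auto simp: eventually_sequentially)
  then have "(\<lambda>N. p n (S b N x)) \<longlonglongrightarrow> b n *\<^sub>C p n x" by (rule tendsto_eventually)
  ultimately show ?thesis using LIMSEQ_unique by blast
qed

lemma S_of_lim:
  assumes L: "(\<lambda>N. S b N x) \<longlonglongrightarrow> L"
  shows "S b' N L = S (\<lambda>n. b' n * b n) N x"
  unfolding S_def
  by (intro sum.cong refl) (simp add: p_lim[OF _ L] scaleC_scaleC)

lemma P_conv_M1: "M (\<lambda>_. 1) x = x"
  unfolding M_def S_one by (rule limI[OF P_tendsto])

end



lemma var_unimodal:
  fixes f :: "real \<Rightarrow> real" and t :: "nat \<Rightarrow> real"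
  assumes mono_t: "\<And>n. t n \<le> t (Suc n)" and rng: "\<And>n. lo \<le> t n \<and> t n \<le> hi"
    and tm: "lo \<le> tm" "tm \<le> hi"
    and inc: "\<And>x y. lo \<le> x \<Longrightarrow> x \<le> y \<Longrightarrow> y \<le> tm \<Longrightarrow> f x \<le> f y"
    and dec: "\<And>x y. tm \<le> x \<Longrightarrow> x \<le> y \<Longrightarrow> y \<le> hi \<Longrightarrow> f y \<le> f x"
    and bnd: "\<And>x. lo \<le> x \<Longrightarrow> x \<le> hi \<Longrightarrow> 0 \<le> f x \<and> f x \<le> B"
  shows "(\<Sum>n<N. \<bar>f (t n) - f (t (Suc n))\<bar>) \<le> 2 * B"
proof -
  define u where "u x = f (min x tm)" for x
  define v where "v x = u x - f x" for x
  have um: "u x \<le> u y" if "lo \<le> x" "x \<le> y" "y \<le> hi" for x y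
    unfolding u_def using that tm by (intro inc) auto
  have vm: "v x \<le> v y" if "lo \<le> x" "x \<le> y" "y \<le> hi" for x y
  proof (cases "y \<le> tm")
    case True then show ?thesis using that by (simp add: v_def u_def)
  next
    case False
    then have "f y \<le> f (max x tm)" using that tm by (intro dec) auto
    moreover have "f (min x tm) - f x \<le> f tm - f (max x tm)"
      using that tm by (cases "x \<le> tm") auto
    ultimately show ?thesis using False by (simp add: v_def u_def)
  qed
  have ub: "0 \<le> u x \<and> u x \<le> B" if "lo \<le> x" "x \<le> hi" for x
    unfolding u_def using that tm by (intro bnd) auto
  have vb: "0 \<le> v x \<and> v x \<le> B" if "lo \<le> x" "x \<le> hi" for x
  proof (cases "x \<le> tm")
    case True then show ?thesis using bnd[of x] that by (simp add: v_def u_def)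
  next
    case False
    then have "f x \<le> f tm" using that tm by (intro dec) auto
    then show ?thesis using False bnd[of x] bnd[of tm] that tm by (simp add: v_def u_def)
  qed
  have "(\<Sum>n<N. \<bar>f (t n) - f (t (Suc n))\<bar>) \<le> (\<Sum>n<N. (u (t (Suc n)) - u (t n)) + (v (t (Suc n)) - v (t n)))"
  proof (intro sum_mono)
    fix n
    have a: "u (t n) \<le> u (t (Suc n))" "v (t n) \<le> v (t (Suc n))"
      using rng[of n] rng[of "Suc n"] mono_t[of n] by (auto intro: um vm)
    have "f (t n) - f (t (Suc n)) = (u (t n) - u (t (Suc n))) - (v (t n) - v (t (Suc n)))"
      by (simp add: v_def)
    then show "\<bar>f (t n) - f (t (Suc n))\<bar> \<le> (u (t (Suc n)) - u (t n)) + (v (t (Suc n)) - v (t n))"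
      using a by linarith
  qed
  also have "\<dots> = (u (t N) - u (t 0)) + (v (t N) - v (t 0))"
    by (simp only: sum.distrib sum_lessThan_telescope[of "\<lambda>n. u (t n)"] sum_lessThan_telescope[of "\<lambda>n. v (t n)"])
  also have "\<dots> \<le> 2 * B" using ub[of "t N"] ub[of "t 0"] vb[of "t N"] vb[of "t 0"] rng[of N] rng[of 0] by linarith
  finally show ?thesis .
qed

lemma g_bound:
  fixes x :: real assumes "0 \<le> x" "x \<le> 1"
  shows "0 \<le> real n * x ^ n * (1 - x) \<and> real n * x ^ n * (1 - x) \<le> 1"
proof
  show "0 \<le> real n * x ^ n * (1 - x)" using assms by simp
  have "real n * x ^ n = (\<Sum>i<n. x ^ n)" by simp
  also have "\<dots> \<le> (\<Sum>i<n. x ^ i)" using assms by (intro sum_mono power_decreasing) auto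
  finally have "real n * x ^ n * (1 - x) \<le> (\<Sum>i<n. x ^ i) * (1 - x)"
    using assms by (intro mult_right_mono) auto
  also have "\<dots> = 1 - x ^ n" by (simp add: one_diff_power_eq mult.commute)
  also have "\<dots> \<le> 1" using assms by simp
  finally show "real n * x ^ n * (1 - x) \<le> 1" .
qed

lemma g_deriv:
  assumes n: "n \<ge> 1"
  shows "((\<lambda>x::real. real n * x ^ n * (1 - x)) has_real_derivative
          (real n * x ^ (n - 1) * (real n - (real n + 1) * x))) (at x)"
proof -
  have xn: "x ^ n = x * x ^ (n - 1)" using n by (metis One_nat_def Suc_pred not_one_le_zero power_Suc zero_less_iff_neq_zero)
  show ?thesis
    by (rule derivative_eq_intros refl | simp)+ (simp add: xn algebra_simps)
qed

lemma g_unimodal: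
  assumes n: "n \<ge> 1"
  defines "g \<equiv> (\<lambda>x::real. real n * x ^ n * (1 - x))"
  shows "\<And>x y. 0 \<le> x \<Longrightarrow> x \<le> y \<Longrightarrow> y \<le> real n / (real n + 1) \<Longrightarrow> g x \<le> g y"
    and "\<And>x y. real n / (real n + 1) \<le> x \<Longrightarrow> x \<le> y \<Longrightarrow> y \<le> 1 \<Longrightarrow> g y \<le> g x"
proof -
  fix x y :: real
  assume xy: "0 \<le> x" "x \<le> y" "y \<le> real n / (real n + 1)"
  show "g x \<le> g y" unfolding g_def
  proof (rule DERIV_nonneg_imp_nondecreasing[OF xy(2)])
    fix z assume z: "x \<le> z" "z \<le> y"
    have "y * (real n + 1) \<le> real n" using xy(3) by (simp add: field_simps)
    moreover have "z * (real n + 1) \<le> y * (real n + 1)" using z by (intro mult_right_mono) auto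
    ultimately have "real n - (real n + 1) * z \<ge> 0" by (simp add: algebra_simps)
    moreover have "0 \<le> z" using z xy by linarith
    ultimately have "real n * z ^ (n - 1) * (real n - (real n + 1) * z) \<ge> 0" by simp
    then show "\<exists>d. ((\<lambda>x::real. real n * x ^ n * (1 - x)) has_real_derivative d) (at z) \<and> d \<ge> 0"
      using g_deriv[OF n, of z] by blast
  qed
next
  fix x y :: real
  assume xy: "real n / (real n + 1) \<le> x" "x \<le> y" "y \<le> 1"
  show "g y \<le> g x" unfolding g_def
  proof (rule DERIV_nonpos_imp_nonincreasing[OF xy(2)])
    fix z assume z: "x \<le> z" "z \<le> y"
    have "real n \<le> x * (real n + 1)" using xy(1) by (simp add: field_simps)
    moreover have "x * (real n + 1) \<le> z * (real n + 1)" using z by (intro mult_right_mono) auto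
    ultimately have "real n - (real n + 1) * z \<le> 0" by (simp add: algebra_simps)
    moreover have "0 \<le> z" using z xy order_trans[of 0 "real n / (real n + 1)"] by (auto intro: order_trans)
    ultimately have "real n * z ^ (n - 1) * (real n - (real n + 1) * z) \<le> 0"
      by (simp add: mult_nonneg_nonpos)
    then show "\<exists>d. ((\<lambda>x::real. real n * x ^ n * (1 - x)) has_real_derivative d) (at z) \<and> d \<le> 0"
      using g_deriv[OF n, of z] by blast
  qed
qed

lemma bv_real:
  assumes "\<And>N. (\<Sum>n<N. \<bar>f n - f (Suc n)\<bar>) \<le> B" "\<And>n. \<bar>f n\<bar> \<le> B"
  shows "bv (\<lambda>n. complex_of_real (f n)) B"
  unfolding bv_def using assms by (simp add: of_real_diff[symmetric] del: of_real_diff)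

lemma bv_mono:
  assumes "\<And>n. f n \<le> f (Suc n)" "\<And>n. 0 \<le> f n \<and> f n \<le> B"
  shows "bv (\<lambda>n. complex_of_real (f n)) B"
proof (rule bv_real)
  fix N
  have "(\<Sum>n<N. \<bar>f n - f (Suc n)\<bar>) = (\<Sum>n<N. f (Suc n) - f n)"
  proof (intro sum.cong refl)
    fix n show "\<bar>f n - f (Suc n)\<bar> = f (Suc n) - f n" using assms(1)[of n] by simp
  qed
  also have "\<dots> = f N - f 0" by (rule sum_lessThan_telescope)
  also have "\<dots> \<le> B" using assms(2)[of N] assms(2)[of 0] by linarith
  finally show "(\<Sum>n<N. \<bar>f n - f (Suc n)\<bar>) \<le> B" .
next
  fix n show "\<bar>f n\<bar> \<le> B" using assms(2)[of n] by simp
qed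



context rsd begin

lemma M_comp:
  assumes "bv b C"
  shows "M b' (M b x) = M (\<lambda>n. b' n * b n) x"
proof -
  have "(\<lambda>N. S b' N (M b x)) = (\<lambda>N. S (\<lambda>n. b' n * b n) N x)"
    using S_of_lim[OF S_conv[OF assms]] by blast
  then show ?thesis by (simp add: M_def)
qed

lemma M_lincomb:
  assumes "bv b C" "bv b' C'"
  shows "M (\<lambda>n. r * (b n - b' n)) x = r *\<^sub>C (M b x - M b' x)"
proof -
  have "(\<lambda>N. S (\<lambda>n. r * (b n - b' n)) N x) \<longlonglongrightarrow> r *\<^sub>C (M b x - M b' x)"
    unfolding S_mult_coef S_diff_coef by (intro tendsto_intros S_conv[OF assms(1)] S_conv[OF assms(2)])
  then show ?thesis by (simp add: M_def limI)
qed

lemma M_bl: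
  assumes "bv b C" "C > 0"
  shows "bounded_linear (M b)"
  by (rule clin_bounded_linear[OF M_clin[OF assms(1)]]) (rule M_norm[OF assms(2,1)])

lemma Rbounded_M:
  assumes C: "C > 0"
    and F: "\<And>T. T \<in> F \<Longrightarrow> \<exists>b. bv b C \<and> (\<forall>v. T v = M b v)"
  shows "R_bounded F"
  unfolding R_bounded_def
proof (intro exI allI impI)
  fix k :: nat and T :: "nat \<Rightarrow> 'a \<Rightarrow> 'a" and x
  assume "\<forall>j<k. T j \<in> F"
  then have "\<forall>j. \<exists>b. j < k \<longrightarrow> bv b C \<and> (\<forall>v. T j v = M b v)" using F by blast
  then obtain b where b: "\<And>j. j < k \<Longrightarrow> bv (b j) C \<and> (\<forall>v. T j v = M (b j) v)" by metis
  have "rad_norm (\<lambda>j. T j (x j)) k = rad_norm (\<lambda>j. M (b j) (x j)) k"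
    by (rule rad_norm_cong) (simp add: b)
  also have "\<dots> \<le> 4 * C * KR * rad_norm x k" by (rule M_Rbound[OF C]) (use b in auto)
  finally show "rad_norm (\<lambda>j. T j (x j)) k \<le> 4 * C * KR * rad_norm x k" .
qed

lemma ritt_part:
  assumes c1: "\<forall>n\<ge>1. 0 < c n \<and> c n < 1" and c2: "\<forall>m n. 1 \<le> m \<and> m \<le> n \<longrightarrow> c m \<le> c n"
    and R: "Ritt (mult_op Xs c)"
  shows "R_Ritt (mult_op Xs c)"
proof -
  define cc where "cc n = c (max n 1)" for n
  have ccm: "cc n \<le> cc (Suc n)" for n unfolding cc_def using c2 by auto
  have ccr: "0 < cc n \<and> cc n < 1" for n unfolding cc_def using c1 by auto
  define bk where "bk k n = complex_of_real (cc n ^ k)" for k n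
  have bvk: "bv (bk k) 1" for k
    unfolding bk_def
  proof (rule bv_mono)
    fix n
    show "cc n ^ k \<le> cc (Suc n) ^ k" using ccm[of n] ccr[of n] by (intro power_mono) auto
    show "0 \<le> cc n ^ k \<and> cc n ^ k \<le> 1" using ccr[of n] by (auto intro: power_le_one)
  qed
  define T where "T = mult_op Xs c"
  have Teq: "T x = M (bk 1) x" for x
  proof -
    have "T x = M (\<lambda>n. complex_of_real (c n)) x"
      unfolding T_def mult_op_def M_def S_real[symmetric] by (rule refl)
    also have "\<dots> = M (bk 1) x" by (rule M_cong) (simp add: bk_def cc_def max_def)
    finally show ?thesis .
  qed
  have bk_mult: "bk k n * bk 1 n = bk (Suc k) n" "bk 1 n * bk k n = bk (Suc k) n" for k n
    by (simp_all add: bk_def mult.commute)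
  have pow: "(T ^^ k) x = M (bk k) x" for k x
  proof (induction k arbitrary: x)
    case 0
    have "bk 0 = (\<lambda>_. 1)" by (simp add: bk_def fun_eq_iff)
    then show ?case by (simp add: P_conv_M1)
  next
    case (Suc k)
    have "(T ^^ Suc k) x = T ((T ^^ k) x)" by simp
    also have "\<dots> = M (bk 1) (M (bk k) x)" by (simp add: Teq Suc.IH)
    also have "\<dots> = M (bk (Suc k)) x" by (simp only: M_comp[OF bvk] bk_mult)
    finally show ?case .
  qed
  have set1: "R_bounded {T ^^ n | n. True}"
  proof (rule Rbounded_M[of 1])
    fix F assume "F \<in> {T ^^ n | n. True}"
    then obtain n where "F = T ^^ n" by blast
    then show "\<exists>b. bv b 1 \<and> (\<forall>v. F v = M b v)" using bvk pow by blast
  qed simp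
  define gk where "gk n m = complex_of_real (real n * cc m ^ n * (1 - cc m))" for n m
  have bvg: "bv (gk n) 2" if n: "n \<ge> 1" for n
    unfolding gk_def
  proof (rule bv_real)
    fix N
    have "(\<Sum>m<N. \<bar>real n * cc m ^ n * (1 - cc m) - real n * cc (Suc m) ^ n * (1 - cc (Suc m))\<bar>) \<le> 2 * 1"
      by (rule var_unimodal[where t=cc and lo=0 and hi=1 and tm="real n / (real n + 1)"
            and f="\<lambda>x. real n * x ^ n * (1 - x)"])
         (use ccm ccr g_bound g_unimodal[OF n] in \<open>auto simp: less_imp_le\<close>)
    then show "(\<Sum>m<N. \<bar>real n * cc m ^ n * (1 - cc m) - real n * cc (Suc m) ^ n * (1 - cc (Suc m))\<bar>) \<le> 2"
      by simp
  next
    fix m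
    have "\<bar>real n * cc m ^ n * (1 - cc m)\<bar> \<le> 1" using g_bound[of "cc m" n] ccr[of m] by auto
    then show "\<bar>real n * cc m ^ n * (1 - cc m)\<bar> \<le> 2" by simp
  qed
  have set2: "R_bounded {(\<lambda>x. of_nat n *\<^sub>R (T ^^ n) (x - T x)) | n. n \<ge> 1}"
  proof (rule Rbounded_M[of 2])
    fix F assume "F \<in> {(\<lambda>x. of_nat n *\<^sub>R (T ^^ n) (x - T x)) | n. n \<ge> 1}"
    then obtain n where n: "n \<ge> 1" and F: "F = (\<lambda>x. of_nat n *\<^sub>R (T ^^ n) (x - T x))" by blast
    have "F v = M (gk n) v" for v
    proof -
      have "F v = real n *\<^sub>R (M (bk n) v - M (bk n) (M (bk 1) v))"
        by (simp add: F pow Teq linear_diff[OF bounded_linear.linear[OF M_bl[OF bvk]]])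
      also have "\<dots> = real n *\<^sub>R (M (bk n) v - M (bk (Suc n)) v)"
        by (simp only: M_comp[OF bvk] bk_mult)
      also have "\<dots> = M (\<lambda>m. complex_of_real (real n) * (bk n m - bk (Suc n) m)) v"
        by (simp only: M_lincomb[OF bvk bvk] scaleC_of_real)
      also have "\<dots> = M (gk n) v"
      proof -
        have "(\<lambda>m. complex_of_real (real n) * (bk n m - bk (Suc n) m)) = gk n"
          by (simp add: fun_eq_iff bk_def gk_def algebra_simps)
        then show ?thesis by simp
      qed
      finally show ?thesis .
    qed
    then show "\<exists>b. bv b 2 \<and> (\<forall>v. F v = M b v)" using bvg[OF n] by blast
  qed simp
  have "bop T" using R by (simp add: Ritt_def T_def)
  then show ?thesis using set1 set2 by (simp add: R_Ritt_def T_def)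
qed

end



lemma zero_in_closure_sector:
  assumes "0 < \<theta>" shows "0 \<in> closure (sector \<theta>)"
  unfolding closure_approachable
proof (intro allI impI)
  fix e :: real assume e: "e > 0"
  have "Arg (complex_of_real (e/2)) = 0" using e by (simp only: Arg_of_real) simp
  then have "complex_of_real (e/2) \<in> sector \<theta>" using e assms unfolding sector_def by simp
  moreover have "dist (complex_of_real (e/2)) 0 < e" using e by simp
  ultimately show "\<exists>y\<in>sector \<theta>. dist y 0 < e" by blast
qed

lemma Re_cmod_cos_Arg: "z \<noteq> 0 \<Longrightarrow> cmod z * cos (Arg z) = Re z"
  using Arg_eq [of z] by (metis Re_exp exp_Ln norm_exp_eq_Re Arg_def)

definition gam :: "real \<Rightarrow> real" where "gam \<theta> = sqrt ((1 - cos \<theta>) / 2)"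

lemma gam_pos: "0 < \<theta> \<Longrightarrow> \<theta> < pi \<Longrightarrow> 0 < gam \<theta>"
  unfolding gam_def using cos_monotone_0_pi[of 0 \<theta>] by simp

lemma sector_good:
  assumes th: "0 < \<theta>" "\<theta> < pi" and z: "z \<notin> closure (sector \<theta>)" and t: "0 \<le> t"
  shows "gam \<theta> * (cmod z + t) \<le> cmod (z - complex_of_real t)"
proof -
  have z0: "z \<noteq> 0" using z zero_in_closure_sector[OF th(1)] by auto
  have "z \<notin> sector \<theta>" using z closure_subset by blast
  then have ag: "\<theta> \<le> \<bar>Arg z\<bar>" using z0 by (simp add: sector_def)
  have "\<bar>Arg z\<bar> \<le> pi" using mpi_less_Arg[of z] Arg_le_pi[of z] by auto
  then have "cos \<bar>Arg z\<bar> \<le> cos \<theta>" using ag th by (intro cos_monotone_0_pi_le) auto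
  then have "cos (Arg z) \<le> cos \<theta>" by simp
  then have re: "Re z \<le> cmod z * cos \<theta>"
    using Re_cmod_cos_Arg[OF z0] by (metis mult_left_mono norm_ge_zero)
  have sq: "(cmod (z - complex_of_real t))\<^sup>2 = (cmod z)\<^sup>2 - 2 * t * Re z + t\<^sup>2"
  proof -
    have "(cmod (z - complex_of_real t))\<^sup>2 = (Re z - t)\<^sup>2 + (Im z)\<^sup>2" by (subst cmod_power2) simp
    moreover have "(cmod z)\<^sup>2 = (Re z)\<^sup>2 + (Im z)\<^sup>2" by (rule cmod_power2)
    ultimately show ?thesis by (simp add: power2_eq_square algebra_simps)
  qed
  have "(1 - cos \<theta>) / 2 * (cmod z + t)\<^sup>2 \<le> (cmod z)\<^sup>2 - 2 * t * (cmod z * cos \<theta>) + t\<^sup>2"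
  proof -
    have "(cmod z)\<^sup>2 - 2 * t * (cmod z * cos \<theta>) + t\<^sup>2 - (1 - cos \<theta>) / 2 * (cmod z + t)\<^sup>2
          = (1 + cos \<theta>) / 2 * (cmod z - t)\<^sup>2"
      by (simp add: power2_eq_square field_simps)
    moreover have "0 \<le> (1 + cos \<theta>) / 2 * (cmod z - t)\<^sup>2"
    proof -
      have "0 \<le> 1 + cos \<theta>" using cos_ge_minus_one[of \<theta>] by linarith
      then show ?thesis by (intro mult_nonneg_nonneg) auto
    qed
    ultimately show ?thesis by linarith
  qed
  also have "\<dots> \<le> (cmod (z - complex_of_real t))\<^sup>2"
    unfolding sq using re t by (simp add: mult_left_mono)
  finally have "sqrt ((1 - cos \<theta>) / 2 * (cmod z + t)\<^sup>2) \<le> sqrt ((cmod (z - complex_of_real t))\<^sup>2)"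
    by (rule real_sqrt_le_mono)
  moreover have "sqrt ((1 - cos \<theta>) / 2 * (cmod z + t)\<^sup>2) = gam \<theta> * (cmod z + t)"
    unfolding gam_def real_sqrt_mult real_sqrt_abs using t by simp
  ultimately show ?thesis by simp
qed

lemma coef_bv:
  fixes a :: "nat \<Rightarrow> real"
  assumes apos: "\<And>n. 0 < a n" and amono: "\<And>n. a n \<le> a (Suc n)"
    and z0: "z \<noteq> 0" and g: "0 < \<gamma>" and good: "\<And>t. 0 \<le> t \<Longrightarrow> \<gamma> * (cmod z + t) \<le> cmod (z - complex_of_real t)"
  shows "bv (\<lambda>n. z / (z - complex_of_real (a n))) (1 / \<gamma>\<^sup>2)"
proof -
  define w where "w = cmod z"
  have w: "w > 0" using z0 by (simp add: w_def)
  have g1: "\<gamma> \<le> 1" using good[of 0] w by (simp add: w_def)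
  have nz: "z - complex_of_real (a n) \<noteq> 0" for n
  proof -
    have "0 < \<gamma> * (w + a n)" using g w apos[of n] by simp
    also have "\<dots> \<le> cmod (z - complex_of_real (a n))" using good[of "a n"] apos[of n] by (simp add: w_def)
    finally show ?thesis by auto
  qed
  have d: "\<gamma> * (w + a n) \<le> cmod (z - complex_of_real (a n))" for n
    using good[of "a n"] apos[of n] by (simp add: w_def)
  have step: "cmod (z / (z - complex_of_real (a n)) - z / (z - complex_of_real (a (Suc n))))
      \<le> 1 / \<gamma>\<^sup>2 * (w / (w + a n) - w / (w + a (Suc n)))" for n
  proof -
    let ?A = "a n" and ?B = "a (Suc n)"
    have AB: "?A \<le> ?B" "0 < ?A" "0 < ?B" using amono apos by auto
    have eqz: "z / (z - complex_of_real ?A) - z / (z - complex_of_real ?B) =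
          z * complex_of_real (?A - ?B) / ((z - complex_of_real ?A) * (z - complex_of_real ?B))"
      using nz[of n] nz[of "Suc n"] by (simp add: field_simps)
    then have "cmod (z / (z - complex_of_real ?A) - z / (z - complex_of_real ?B)) =
          w * (?B - ?A) / (cmod (z - complex_of_real ?A) * cmod (z - complex_of_real ?B))"
    proof -
      have "cmod (complex_of_real ?A - complex_of_real ?B) = ?B - ?A"
        using AB by (simp add: of_real_diff[symmetric] del: of_real_diff)
      then show ?thesis using AB by (simp add: eqz norm_mult norm_divide w_def)
    qed
    also have "\<dots> \<le> w * (?B - ?A) / ((\<gamma> * (w + ?A)) * (\<gamma> * (w + ?B)))"
    proof -
      have p1: "0 < \<gamma> * (w + ?A)" "0 < \<gamma> * (w + ?B)" using AB w g by auto
      have le: "(\<gamma> * (w + ?A)) * (\<gamma> * (w + ?B)) \<le> cmod (z - complex_of_real ?A) * cmod (z - complex_of_real ?B)"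
        using d[of n] d[of "Suc n"] p1 by (intro mult_mono) auto
      have "0 < (cmod (z - complex_of_real ?A) * cmod (z - complex_of_real ?B)) * ((\<gamma> * (w + ?A)) * (\<gamma> * (w + ?B)))"
        using p1 le by (metis mult_pos_pos order_less_le_trans)
      then show ?thesis using AB w by (intro divide_left_mono[OF le]) auto
    qed
    also have "\<dots> = 1 / \<gamma>\<^sup>2 * (w / (w + ?A) - w / (w + ?B))"
      using AB w g by (simp add: field_simps power2_eq_square)
    finally show ?thesis .
  qed
  show ?thesis unfolding bv_def
  proof (intro conjI allI)
    fix N
    have "(\<Sum>n<N. cmod (z / (z - complex_of_real (a n)) - z / (z - complex_of_real (a (Suc n)))))
        \<le> (\<Sum>n<N. 1 / \<gamma>\<^sup>2 * (w / (w + a n) - w / (w + a (Suc n))))"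
      by (intro sum_mono step)
    also have "\<dots> = 1 / \<gamma>\<^sup>2 * (w / (w + a 0) - w / (w + a N))"
      by (subst sum_distrib_left[symmetric]) (simp only: sum_lessThan_telescope'[of "\<lambda>n. w / (w + a n)"])
    also have "\<dots> \<le> 1 / \<gamma>\<^sup>2 * 1"
    proof (intro mult_left_mono)
      have "w / (w + a 0) \<le> 1" using w apos[of 0] by simp
      moreover have "0 \<le> w / (w + a N)" using w apos[of N] by simp
      ultimately show "w / (w + a 0) - w / (w + a N) \<le> 1" by linarith
    qed simp
    finally show "(\<Sum>n<N. cmod (z / (z - complex_of_real (a n)) - z / (z - complex_of_real (a (Suc n))))) \<le> 1 / \<gamma>\<^sup>2"
      by simp
  next
    fix n
    have "cmod (z / (z - complex_of_real (a n))) = w / cmod (z - complex_of_real (a n))"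
      by (simp add: norm_divide w_def)
    also have "\<dots> \<le> w / (\<gamma> * (w + a n))"
    proof -
      have p: "0 < \<gamma> * (w + a n)" using w g apos[of n] by simp
      then have "0 < cmod (z - complex_of_real (a n)) * (\<gamma> * (w + a n))" using d[of n]
        by (metis mult_pos_pos order_less_le_trans)
      then show ?thesis using w by (intro divide_left_mono[OF d[of n]]) auto
    qed
    also have "\<dots> \<le> 1 / \<gamma>"
    proof -
      have e: "w / (\<gamma> * (w + a n)) = (w / (w + a n)) / \<gamma>" by (simp add: divide_divide_eq_left mult.commute)
      have "w / (w + a n) \<le> 1" using w apos[of n] by simp
      then show ?thesis unfolding e using g by (intro divide_right_mono) auto
    qed
    also have "\<dots> \<le> 1 / \<gamma>\<^sup>2"
      using g g1 by (simp add: field_simps power2_eq_square mult_left_le_one_le)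
    finally show "cmod (z / (z - complex_of_real (a n))) \<le> 1 / \<gamma>\<^sup>2" .
  qed
qed



lemma resolvent_unique:
  assumes "is_resolvent D A z R1" "is_resolvent D A z R2"
  shows "R1 = R2"
proof
  fix x
  have "R2 x \<in> D" and e: "z *\<^sub>C R2 x - A (R2 x) = x" using assms(2) by (auto simp: is_resolvent_def)
  then have "R1 (z *\<^sub>C R2 x - A (R2 x)) = R2 x" using assms(1) by (auto simp: is_resolvent_def)
  then show "R1 x = R2 x" using e by simp
qed

lemma resolvent_eq: "is_resolvent D A z R \<Longrightarrow> resolvent D A z = R"
  unfolding resolvent_def by (rule the_equality) (auto intro: resolvent_unique)

context rsd begin

lemma resolvent_M:
  fixes a a' :: "nat \<Rightarrow> real"
  assumes apos: "\<And>n. 0 < a' n" and amono: "\<And>n. a' n \<le> a' (Suc n)" and aa: "\<And>n. n \<ge> 1 \<Longrightarrow> a n = a' n"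
    and z0: "z \<noteq> 0" and g: "0 < \<gamma>" and good: "\<And>t. 0 \<le> t \<Longrightarrow> \<gamma> * (cmod z + t) \<le> cmod (z - complex_of_real t)"
  defines "b \<equiv> (\<lambda>n. z / (z - complex_of_real (a' n)))"
  shows "is_resolvent (mult_dom Xs a) (mult_op Xs a) z (\<lambda>x. inverse z *\<^sub>C M b x)"
proof -
  define C where "C = 1 / \<gamma>\<^sup>2"
  have C: "C > 0" using g by (simp add: C_def)
  have bvb: "bv b C" unfolding b_def C_def by (rule coef_bv[where a=a' and z=z and \<gamma>=\<gamma>]) (use apos amono z0 g good in auto)
  define ar where "ar n = complex_of_real (a' n)" for n
  have nz: "z - ar n \<noteq> 0" for n
  proof -
    have "0 < \<gamma> * (cmod z + a' n)" using g apos[of n] z0 by (simp add: add_pos_pos)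
    also have "\<dots> \<le> cmod (z - ar n)" using good[of "a' n"] apos[of n] by (simp add: ar_def)
    finally show ?thesis by auto
  qed
  have Aeq: "mult_op Xs a y = M ar y" for y
  proof -
    have "mult_op Xs a y = M (\<lambda>n. complex_of_real (a n)) y"
      unfolding mult_op_def M_def S_real[symmetric] by (rule refl)
    also have "\<dots> = M ar y" by (rule M_cong) (simp add: aa ar_def)
    finally show ?thesis .
  qed
  have Sa: "(\<Sum>n = 1..N. a n *\<^sub>R p n y) = S ar N y" for N y
    unfolding S_real by (rule S_cong) (simp add: aa ar_def)
  have Deq: "y \<in> mult_dom Xs a \<longleftrightarrow> convergent (\<lambda>N. S ar N y)" for y
    unfolding mult_dom_def Sa by (rule mem_Collect_eq)
  define R where "R x = inverse z *\<^sub>C M b x" for x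
  have pR: "p n (R x) = (inverse z * b n) *\<^sub>C p n x" if "n \<ge> 1" for n x
    unfolding R_def p_scaleC p_lim[OF that S_conv[OF bvb]] by (simp add: scaleC_scaleC)
  have SR: "S ar N (R x) = S b N x - P N x" for N x
  proof -
    have "S ar N (R x) = S (\<lambda>n. b n - 1) N x"
      unfolding S_def
    proof (intro sum.cong refl)
      fix n assume "n \<in> {1..N}"
      then have "p n (R x) = (inverse z * b n) *\<^sub>C p n x" by (intro pR) auto
      moreover have "ar n * (inverse z * b n) = b n - 1"
        using nz[of n] z0 by (simp add: b_def ar_def field_simps)
      ultimately show "ar n *\<^sub>C p n (R x) = (b n - 1) *\<^sub>C p n x" by (simp add: scaleC_scaleC)
    qed
    also have "\<dots> = S b N x - P N x" by (simp add: S_diff_coef S_one)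
    finally show ?thesis .
  qed
  have SRlim: "(\<lambda>N. S ar N (R x)) \<longlonglongrightarrow> M b x - x" for x
    unfolding SR by (intro tendsto_intros S_conv[OF bvb] P_tendsto)
  have ARx: "mult_op Xs a (R x) = M b x - x" for x
    unfolding Aeq M_def[of ar] by (rule limI[OF SRlim])
  have zR: "z *\<^sub>C R x = M b x" for x
    using z0 by (simp add: R_def scaleC_scaleC scaleC_one)
  have bopR: "bop R"
    unfolding bop_def
  proof
    show "clin_on UNIV R"
      using M_clin[OF bvb] by (simp add: clin_on_def R_def scaleC_add_right scaleC_scaleC mult.commute)
    show "\<exists>K. \<forall>x. norm (R x) \<le> K * norm x"
    proof (intro exI allI)
      fix x
      have "norm (R x) = cmod (inverse z) * norm (M b x)" by (simp add: R_def norm_scaleC)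
      also have "\<dots> \<le> cmod (inverse z) * (4 * C * KR * norm x)"
        by (intro mult_left_mono M_norm[OF C bvb]) auto
      finally show "norm (R x) \<le> (cmod (inverse z) * (4 * C * KR)) * norm x" by (simp add: mult.assoc)
    qed
  qed
  have inv: "R (z *\<^sub>C y - mult_op Xs a y) = y" if y: "y \<in> mult_dom Xs a" for y
  proof -
    define v where "v = z *\<^sub>C y - mult_op Xs a y"
    have conv: "(\<lambda>N. S ar N y) \<longlonglongrightarrow> mult_op Xs a y"
      using y unfolding Deq by (simp add: Aeq M_def convergent_LIMSEQ_iff)
    have pv: "p n v = (z - ar n) *\<^sub>C p n y" if "n \<ge> 1" for n
      unfolding v_def p_diff p_scaleC p_lim[OF that conv] by (simp add: scaleC_diff_left)
    have "S b N v = z *\<^sub>C P N y" for N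
    proof -
      have "S b N v = S (\<lambda>_. z) N y"
        unfolding S_def
      proof (intro sum.cong refl)
        fix n assume "n \<in> {1..N}"
        then have "p n v = (z - ar n) *\<^sub>C p n y" by (intro pv) auto
        moreover have "b n * (z - ar n) = z" using nz[of n] by (simp add: b_def ar_def)
        ultimately show "b n *\<^sub>C p n v = z *\<^sub>C p n y" by (simp add: scaleC_scaleC)
      qed
      also have "\<dots> = z *\<^sub>C P N y"
        using S_mult_coef[of z "\<lambda>_. 1" N y] by (simp add: S_one)
      finally show ?thesis .
    qed
    then have "(\<lambda>N. S b N v) \<longlonglongrightarrow> z *\<^sub>C y" by (simp add: tendsto_scaleC[OF tendsto_const P_tendsto])
    then have "M b v = z *\<^sub>C y" by (simp add: M_def limI)
    then show ?thesis using z0 by (simp add: R_def v_def scaleC_scaleC scaleC_one)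
  qed
  have "is_resolvent (mult_dom Xs a) (mult_op Xs a) z R"
    unfolding is_resolvent_def
  proof (intro conjI allI ballI)
    show "bop R" by (rule bopR)
    fix x
    show "R x \<in> mult_dom Xs a" unfolding Deq using SRlim by (rule convergentI)
    show "z *\<^sub>C R x - mult_op Xs a (R x) = x" by (simp add: zR ARx)
  next
    fix y assume "y \<in> mult_dom Xs a"
    then show "R (z *\<^sub>C y - mult_op Xs a y) = y" by (rule inv)
  qed
  then show ?thesis by (simp add: R_def[abs_def])
qed

end



context rsd begin

lemma sect_part:
  fixes a :: "nat \<Rightarrow> real"
  assumes a1: "\<forall>n\<ge>1. 0 < a n" and a2: "\<forall>m n. 1 \<le> m \<and> m \<le> n \<longrightarrow> a m \<le> a n"
    and ex: "\<exists>\<omega>. 0 < \<omega> \<and> \<omega> < pi \<and> sectorial_type (mult_dom Xs a) (mult_op Xs a) \<omega>"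
  shows "R_sectorial_type0 (mult_dom Xs a) (mult_op Xs a)"
proof -
  define a' where "a' n = a (max n 1)" for n
  have apos: "0 < a' n" for n unfolding a'_def using a1 by auto
  have amono: "a' n \<le> a' (Suc n)" for n unfolding a'_def using a2 by auto
  have aa: "a n = a' n" if "n \<ge> 1" for n unfolding a'_def using that by (simp add: max_def)
  define bz where "bz z n = z / (z - complex_of_real (a' n))" for z n
  have key: "(\<lambda>x. z *\<^sub>C resolvent (mult_dom Xs a) (mult_op Xs a) z x) = M (bz z) \<and>
             bv (bz z) (1 / (gam \<theta>)\<^sup>2) \<and> is_resolvent (mult_dom Xs a) (mult_op Xs a) z (\<lambda>x. inverse z *\<^sub>C M (bz z) x)"
    if th: "0 < \<theta>" "\<theta> < pi" and z: "z \<notin> closure (sector \<theta>)" for \<theta> z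
  proof -
    have z0: "z \<noteq> 0" using z zero_in_closure_sector[OF th(1)] by auto
    have g: "0 < gam \<theta>" by (rule gam_pos[OF th])
    have good: "\<And>t. 0 \<le> t \<Longrightarrow> gam \<theta> * (cmod z + t) \<le> cmod (z - complex_of_real t)"
      by (rule sector_good[OF th z])
    have res: "is_resolvent (mult_dom Xs a) (mult_op Xs a) z (\<lambda>x. inverse z *\<^sub>C M (bz z) x)"
      unfolding bz_def by (rule resolvent_M[where a=a and a'=a' and z=z and \<gamma>="gam \<theta>"]) (use apos amono aa z0 g good in auto)
    have "(\<lambda>x. z *\<^sub>C resolvent (mult_dom Xs a) (mult_op Xs a) z x) = M (bz z)"
      using z0 by (simp add: resolvent_eq[OF res] scaleC_scaleC scaleC_one fun_eq_iff)
    moreover have "bv (bz z) (1 / (gam \<theta>)\<^sup>2)"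
      unfolding bz_def by (rule coef_bv[where a=a' and z=z]) (use apos amono z0 g good in auto)
    ultimately show ?thesis using res by blast
  qed
  have cdd: "closed_densely_defined (mult_dom Xs a) (mult_op Xs a)"
    using ex by (auto simp: sectorial_type_def)
  have bounds: "op_bounded_set {(\<lambda>x. z *\<^sub>C resolvent (mult_dom Xs a) (mult_op Xs a) z x) | z. z \<notin> closure (sector \<theta>)}
       \<and> R_bounded {(\<lambda>x. z *\<^sub>C resolvent (mult_dom Xs a) (mult_op Xs a) z x) | z. z \<notin> closure (sector \<theta>)}"
    if th: "0 < \<theta>" "\<theta> < pi" for \<theta>
  proof
    define C where "C = 1 / (gam \<theta>)\<^sup>2"
    have C: "C > 0" using gam_pos[OF th] by (simp add: C_def)
    show "op_bounded_set {(\<lambda>x. z *\<^sub>C resolvent (mult_dom Xs a) (mult_op Xs a) z x) | z. z \<notin> closure (sector \<theta>)}"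
      unfolding op_bounded_set_def
    proof (intro exI ballI allI)
      fix T x assume "T \<in> {(\<lambda>x. z *\<^sub>C resolvent (mult_dom Xs a) (mult_op Xs a) z x) | z. z \<notin> closure (sector \<theta>)}"
      then obtain z where z: "z \<notin> closure (sector \<theta>)" and T: "T = (\<lambda>x. z *\<^sub>C resolvent (mult_dom Xs a) (mult_op Xs a) z x)"
        by blast
      have "T = M (bz z)" "bv (bz z) C" using key[OF th z] T by (auto simp: C_def)
      then show "norm (T x) \<le> 4 * C * KR * norm x" using M_norm[OF C] by simp
    qed
    show "R_bounded {(\<lambda>x. z *\<^sub>C resolvent (mult_dom Xs a) (mult_op Xs a) z x) | z. z \<notin> closure (sector \<theta>)}"
    proof (rule Rbounded_M[OF C])
      fix T assume "T \<in> {(\<lambda>x. z *\<^sub>C resolvent (mult_dom Xs a) (mult_op Xs a) z x) | z. z \<notin> closure (sector \<theta>)}"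
      then obtain z where z: "z \<notin> closure (sector \<theta>)" and T: "T = (\<lambda>x. z *\<^sub>C resolvent (mult_dom Xs a) (mult_op Xs a) z x)"
        by blast
      have "T = M (bz z)" "bv (bz z) C" using key[OF th z] T by (auto simp: C_def)
      then show "\<exists>b. bv b C \<and> (\<forall>v. T v = M b v)" by blast
    qed
  qed
  show ?thesis
    unfolding R_sectorial_type0_def
  proof (intro allI impI)
    fix \<omega> :: real assume om: "0 < \<omega> \<and> \<omega> < pi"
    have spec: "op_spectrum (mult_dom Xs a) (mult_op Xs a) \<subseteq> closure (sector \<omega>)"
    proof
      fix z assume zs: "z \<in> op_spectrum (mult_dom Xs a) (mult_op Xs a)"
      show "z \<in> closure (sector \<omega>)"
      proof (rule ccontr)
        assume "z \<notin> closure (sector \<omega>)"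
        then have "is_resolvent (mult_dom Xs a) (mult_op Xs a) z (\<lambda>x. inverse z *\<^sub>C M (bz z) x)"
          using key[of \<omega> z] om by blast
        then have "z \<in> resolvent_set (mult_dom Xs a) (mult_op Xs a)" by (auto simp: resolvent_set_def)
        then show False using zs by (simp add: op_spectrum_def)
      qed
    qed
    show "R_sectorial_type (mult_dom Xs a) (mult_op Xs a) \<omega>"
      unfolding R_sectorial_type_def sectorial_type_def
      using cdd spec bounds om by auto
  qed
qed

end

theorem lemma2:
  fixes Xs :: "nat \<Rightarrow> 'a::complex_banach set"
  assumes RS: "R_schauder_decomp Xs"
  shows "(\<forall>a :: nat \<Rightarrow> real.
            (\<forall>n\<ge>1. 0 < a n) \<and> (\<forall>m n. 1 \<le> m \<and> m \<le> n \<longrightarrow> a m \<le> a n) \<and>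
            (\<exists>\<omega>. 0 < \<omega> \<and> \<omega> < pi \<and> sectorial_type (mult_dom Xs a) (mult_op Xs a) \<omega>)
            \<longrightarrow> R_sectorial_type0 (mult_dom Xs a) (mult_op Xs a))
       \<and> (\<forall>c :: nat \<Rightarrow> real.
            (\<forall>n\<ge>1. 0 < c n \<and> c n < 1) \<and> (\<forall>m n. 1 \<le> m \<and> m \<le> n \<longrightarrow> c m \<le> c n) \<and>
            Ritt (mult_op Xs c)
            \<longrightarrow> R_Ritt (mult_op Xs c))"
proof -
  interpret rsd Xs by (rule rsd.intro[OF RS])
  show ?thesis using sect_part ritt_part by blast
qed

end
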